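(* Let $n\ge 2$ and $1\le i\le n-1$. Then $S_i(n)(c_1,\dots,c_{n-1})$, as a polynomial in indeterminates $c_1,\dots,c_{n-1}$, involves only $c_1,\dots,c_{n-i}$, has total degree at most $\min\{[\frac{2(n-i)+1}{3}],[\frac{n+1}{2}]\}$, and has the form \[\tilde F(c_1,\dots,c_{n-i-1})+\frac{(-1)^i}{2^i\,i!}\,c_{n-i}\] for some polynomial $\tilde F$ (depending on $n$ and $i$) with rational coefficients.
   Context: Let $a_0,a_1,\dots$ be indeterminates and $a(x)=\sum_{i\ge0}a_ix^i$. For a positive integer $j$ set $G(x)=\prod_{i=0}^{j-1}\frac{1+a(x)x^2}{1+ix}$, $H(x)=\prod_{i=1-j}^{-1}\frac{1+ix}{1+a(x)x^2}$, $u=2j-1$, $v=j(j-1)$. For each $n\ge1$ there are unique polynomials $S_0(n),\dots,S_n(n)\in\mathbb{Q}[a_0,\dots,a_{n-2}]$, independent of $j$, such that for every positive integer $j$ the coefficient of $x^{n-1}$ in $\frac{G(x)-H(x)}{x^2}(1+a(x)x^2)$ equals $u\big(a_{n-1}+S_0(n)+\sum_{i=1}^nS_i(n)v^i\big)$. $S_i(n)(c_1,\dots,c_{n-1})$ denotes the result of substituting $a_k=c_{k+1}$ for $0\le k\le n-2$. $[x]$ is the integer part of $x$. *)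

theory Defs
  imports Complex_Main "HOL-Library.Poly_Mapping" "HOL-Computational_Algebra.Formal_Power_Series"
begin

text \<open>Multivariate polynomials over the rationals in the indeterminates a_0, a_1, ...
  (variable a_k has index k): finitely supported maps from monomials to coefficients.\<close>
type_synonym mpoly = "(nat \<Rightarrow>\<^sub>0 nat) \<Rightarrow>\<^sub>0 rat"

definition mvar :: "nat \<Rightarrow> mpoly" where
  "mvar k = Poly_Mapping.single (Poly_Mapping.single k 1) 1"

definition mconst :: "rat \<Rightarrow> mpoly" where
  "mconst c = Poly_Mapping.single 0 c"

definition mvars :: "mpoly \<Rightarrow> nat set" where
  "mvars p = (\<Union>m\<in>Poly_Mapping.keys p. Poly_Mapping.keys m)"

definition tdeg :: "mpoly \<Rightarrow> nat" where
  "tdeg p = Max (insert 0 ((\<lambda>m. sum (Poly_Mapping.lookup m) (Poly_Mapping.keys m)) ` Poly_Mapping.keys p))"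

definition fps_inv1 :: "mpoly fps \<Rightarrow> mpoly fps" where
  "fps_inv1 f = (THE g. f * g = 1)"

definition aser :: "mpoly fps" where
  "aser = Abs_fps (\<lambda>i. mvar i)"

definition Gser :: "nat \<Rightarrow> mpoly fps" where
  "Gser j = (\<Prod>i\<in>{0..<j}. (1 + aser * fps_X ^ 2) * fps_inv1 (1 + of_nat i * fps_X))"

definition Hser :: "nat \<Rightarrow> mpoly fps" where
  "Hser j = (\<Prod>i\<in>{1 - int j .. -1}. (1 + of_int i * fps_X) * fps_inv1 (1 + aser * fps_X ^ 2))"

definition coeffGH :: "nat \<Rightarrow> nat \<Rightarrow> mpoly" where
  "coeffGH n j = fps_nth (fps_shift 2 (Gser j - Hser j) * (1 + aser * fps_X ^ 2)) (n - 1)"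

definition is_S :: "nat \<Rightarrow> (nat \<Rightarrow> mpoly) \<Rightarrow> bool" where
  "is_S n S \<longleftrightarrow>
     (\<forall>i. mvars (S i) \<subseteq> {..<n - 1}) \<and> (\<forall>i>n. S i = 0) \<and>
     (\<forall>j::nat. j \<ge> 1 \<longrightarrow>
        coeffGH n j = of_int (2 * int j - 1) *
          (mvar (n - 1) + S 0 + (\<Sum>i=1..n. S i * of_int (int j * (int j - 1)) ^ i)))"

end

theory Submission imports Defs "HOL-Computational_Algebra.Polynomial" begin

unbundle fps_syntax

abbreviation "keys \<equiv> Poly_Mapping.keys"
abbreviation "lookup \<equiv> Poly_Mapping.lookup"
abbreviation "single \<equiv> Poly_Mapping.single"

definition ee :: "nat \<Rightarrow> (nat \<Rightarrow>\<^sub>0 nat)" where "ee t = single t 1"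

lemma keys_sum_sub: "keys (sum (f::_\<Rightarrow>mpoly) A) \<subseteq> (\<Union>a\<in>A. keys (f a))"
proof (induction A rule: infinite_finite_induct)
  case (insert x F) then show ?case using keys_add[of "f x" "sum f F"] by auto
qed auto

lemma keys_uminus': "keys (- (p::mpoly)) = keys p"
  by (auto simp: in_keys_iff lookup_uminus)

lemma keys_diff_sub: "keys ((p::mpoly) - q) \<subseteq> keys p \<union> keys q"
  by (auto simp: in_keys_iff lookup_minus lookup_uminus)

lemma lookup_mvar: "lookup (mvar k) m = (if m = ee k then 1 else 0)"
  by (simp add: mvar_def ee_def lookup_single when_def)

lemma keys_mvar: "keys (mvar k) = {ee k}"
  by (simp add: mvar_def ee_def)

lemma keys_mconst: "keys (mconst c) \<subseteq> {0}"
  by (simp add: mconst_def)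

lemma nat_pm_add_eq_0: "(a::nat\<Rightarrow>\<^sub>0nat) + b = 0 \<longleftrightarrow> a = 0 \<and> b = 0"
  by (metis add_cancel_right_left add_eq_0_iff_both_eq_0 lookup_add poly_mapping_eqI lookup_zero)

lemma lookup_mult_0: "lookup ((p::mpoly) * q) 0 = lookup p 0 * lookup q 0"
proof -
  have "lookup (p * q) 0 = (\<Sum>l. lookup p l * (\<Sum>qa. lookup q qa when 0 = l + qa))"
    by (rule lookup_mult)
  also have "\<dots> = (\<Sum>l. lookup p l * (lookup q 0 when l = 0))"
  proof -
    have "\<And>l. (\<Sum>qa. lookup q qa when 0 = l + qa) = (lookup q 0 when l = 0)"
    proof -
      fix l
      have "\<And>qa. (lookup q qa when 0 = l + qa) = (lookup q qa when qa = 0 when l = 0)"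
        using nat_pm_add_eq_0 by (auto simp: when_def)
      then show "(\<Sum>qa. lookup q qa when 0 = l + qa) = (lookup q 0 when l = 0)"
        by (simp add: Sum_any_when_independent)
    qed
    then show ?thesis by simp
  qed
  also have "\<dots> = (\<Sum>l. lookup p l * lookup q 0 when l = 0)"
    by (simp add: mult_when)
  also have "\<dots> = lookup p 0 * lookup q 0" by simp
  finally show ?thesis .
qed


lemma nat_pm_add_eq_single:
  "(a::nat\<Rightarrow>\<^sub>0nat) + b = single t 1 \<longleftrightarrow> (a = 0 \<and> b = single t 1) \<or> (a = single t 1 \<and> b = 0)"
proof
  assume h: "a + b = single t 1"
  have l: "\<And>l. lookup a l + lookup b l = (if l = t then 1 else 0)"
  proof -
    fix l
    have "lookup (a + b) l = lookup (single t 1) l" using h by simp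
    then show "lookup a l + lookup b l = (if l = t then 1 else 0)"
      by (simp add: lookup_add lookup_single when_def)
  qed
  have "lookup a t = 0 \<or> lookup b t = 0" using l[of t] by auto
  then show "(a = 0 \<and> b = single t 1) \<or> (a = single t 1 \<and> b = 0)"
  proof
    assume "lookup a t = 0"
    then have "a = 0"
    proof (intro poly_mapping_eqI)
      fix l assume "lookup a t = 0"
      then show "lookup a l = lookup 0 l" using l[of l] by (cases "l = t") auto
    qed
    then show ?thesis using h by auto
  next
    assume "lookup b t = 0"
    then have "b = 0"
    proof (intro poly_mapping_eqI)
      fix l assume "lookup b t = 0"
      then show "lookup b l = lookup 0 l" using l[of l] by (cases "l = t") auto
    qed
    then show ?thesis using h by auto
  qed
qed auto

lemma e_ne_0: "single t (1::nat) \<noteq> 0"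
  by (metis lookup_single_eq lookup_zero one_neq_zero)

lemma lookup_mult_e0: "lookup ((p::mpoly) * q) (single t 1) =
   lookup p 0 * lookup q (single t 1) + lookup p (single t 1) * lookup q 0"
proof -
  let ?e = "single t 1 :: nat \<Rightarrow>\<^sub>0 nat"
  have ne: "?e \<noteq> 0" by (rule e_ne_0)
  have inner: "(\<Sum>qa. lookup q qa when ?e = l + qa) = (lookup q ?e when l = 0) + (lookup q 0 when l = ?e)" for l
  proof (cases "l = 0")
    case True
    have "(\<Sum>qa. lookup q qa when ?e = l + qa) = (\<Sum>qa. lookup q qa when qa = ?e)"
      using True by (intro Sum_any.cong) (auto simp: when_def)
    also have "\<dots> = lookup q ?e" by (rule Sum_any_when_equal)
    finally show ?thesis using True ne by simp
  next
    case False
    have eq: "(?e = l + qa) \<longleftrightarrow> (qa = 0 \<and> l = ?e)" for qa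
      using nat_pm_add_eq_single[of l qa t] False by auto
    have "(\<Sum>qa. lookup q qa when ?e = l + qa) = (\<Sum>qa. (lookup q qa when qa = 0) when l = ?e)"
      by (intro Sum_any.cong) (simp only: eq when_when conj_commute)
    also have "\<dots> = ((\<Sum>qa. lookup q qa when qa = 0) when l = ?e)"
      by (rule Sum_any_when_independent)
    also have "\<dots> = (lookup q 0 when l = ?e)" by simp
    finally show ?thesis using False by simp
  qed
  have "lookup (p * q) ?e = (\<Sum>l. lookup p l * (\<Sum>qa. lookup q qa when ?e = l + qa))"
    by (rule lookup_mult)
  also have "\<dots> = (\<Sum>l. lookup p l * ((lookup q ?e when l = 0) + (lookup q 0 when l = ?e)))"
    by (simp only: inner)
  also have "\<dots> = (\<Sum>l. (lookup p l * lookup q ?e when l = 0) + (lookup p l * lookup q 0 when l = ?e))"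
    by (simp only: distrib_left mult_when)
  also have "\<dots> = (\<Sum>l. (lookup p l * lookup q ?e when l = 0)) + (\<Sum>l. (lookup p l * lookup q 0 when l = ?e))"
    by (rule Sum_any.distrib) (auto simp: when_def)
  also have "\<dots> = lookup p 0 * lookup q ?e + lookup p ?e * lookup q 0" by simp
  finally show ?thesis .
qed

lemma lookup_mult_e: "lookup ((p::mpoly) * q) (ee t) =
   lookup p 0 * lookup q (ee t) + lookup p (ee t) * lookup q 0"
  unfolding ee_def by (rule lookup_mult_e0)

lemma lookup_mult_const: "lookup ((p::mpoly) * single 0 r) m = lookup p m * r"
proof -
  have "lookup (p * single 0 r) m = (\<Sum>l. lookup p l * (\<Sum>qa. lookup (single 0 r) qa when m = l + qa))"
    by (rule lookup_mult)
  also have "\<dots> = (\<Sum>l. lookup p l * r when l = m)"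
  proof -
    have "\<And>l. (\<Sum>qa. lookup (single 0 r) qa when m = l + qa) = (r when l = m)"
    proof -
      fix l
      have "\<And>qa. (lookup (single 0 r) qa when m = l + qa) = (r when qa = 0 when l = m)"
        by (auto simp: when_def lookup_single)
      then show "(\<Sum>qa. lookup (single 0 r) qa when m = l + qa) = (r when l = m)"
        by (simp add: Sum_any_when_independent)
    qed
    then show ?thesis by (simp add: mult_when)
  qed
  also have "\<dots> = lookup p m * r" by simp
  finally show ?thesis .
qed

lemma lookup_mult_of_nat: "lookup ((p::mpoly) * of_nat k) m = lookup p m * of_nat k"
    using lookup_mult_const[of p "of_nat k" m] by simp

lemma lookup_mult_of_int: "lookup ((p::mpoly) * of_int k) m = lookup p m * of_int k"
    using lookup_mult_const[of p "of_int k" m] by simp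

lemma keys_mult_const: "keys ((p::mpoly) * single 0 r) \<subseteq> keys p"
    by (auto simp: in_keys_iff lookup_mult_const)

definition om :: "(nat \<Rightarrow>\<^sub>0 nat) \<Rightarrow> nat \<Rightarrow> int" where
  "om m s = 2 * int s - (\<Sum>l\<in>keys m. (2 * int l + 3) * int (lookup m l))"

definition xw :: "(nat \<Rightarrow>\<^sub>0 nat) \<Rightarrow> nat" where
  "xw m = (\<Sum>l\<in>keys m. (l + 2) * lookup m l)"

lemma sum_keys_add_lin:
  fixes f :: "nat \<Rightarrow> 'b::comm_semiring_1" 
  shows "(\<Sum>l\<in>keys ((a::nat\<Rightarrow>\<^sub>0nat) + b). f l * of_nat (lookup (a + b) l)) =
     (\<Sum>l\<in>keys a. f l * of_nat (lookup a l)) + (\<Sum>l\<in>keys b. f l * of_nat (lookup b l))"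
    by (rule setsum_keys_plus_distrib) (auto simp: distrib_left)

lemma om_add: "om (a + b) (s1 + s2) = om a s1 + om b s2"
  unfolding om_def using sum_keys_add_lin[of "\<lambda>l. 2 * int l + 3" a b] by simp

lemma xw_add: "xw (a + b) = xw a + xw b"
  unfolding xw_def using sum_keys_add_lin[of "\<lambda>l. l + 2" a b] by simp

lemma om_shift: "om m s = om m s' + 2 * (int s - int s')"
  by (simp add: om_def)

lemma om_0[simp]: "om 0 s = 2 * int s" by (simp add: om_def)
lemma xw_0[simp]: "xw 0 = 0" by (simp add: xw_def)
lemma om_e[simp]: "om (ee k) s = 2 * int s - 2 * int k - 3" by (simp add: om_def ee_def)
lemma xw_e[simp]: "xw (ee k) = k + 2" by (simp add: xw_def ee_def)
lemma ee_ne_0[simp]: "ee k \<noteq> 0" unfolding ee_def by (rule e_ne_0)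


definition Wc :: "int \<Rightarrow> nat \<Rightarrow> mpoly poly \<Rightarrow> bool" where
  "Wc c s P \<longleftrightarrow> (\<forall>d. \<forall>m\<in>keys (coeff P d). int d + c \<le> om m s \<and> xw m \<le> s)"

lemma WcI: "(\<And>d m. m \<in> keys (coeff P d) \<Longrightarrow> int d + c \<le> om m s \<and> xw m \<le> s) \<Longrightarrow> Wc c s P"
  by (auto simp: Wc_def)

lemma WcD: "Wc c s P \<Longrightarrow> m \<in> keys (coeff P d) \<Longrightarrow> int d + c \<le> om m s \<and> xw m \<le> s"
  by (auto simp: Wc_def)

lemma Wc_mono: "c' \<le> c \<Longrightarrow> Wc c s P \<Longrightarrow> Wc c' s P"
  by (force simp: Wc_def)

lemma Wc_idx: "Wc c s' P \<Longrightarrow> s' \<le> s \<Longrightarrow> Wc (c + 2 * (int s - int s')) s P"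
  unfolding Wc_def using om_shift[of _ s s'] by fastforce

lemma Wc_zero[simp]: "Wc c s 0" by (simp add: Wc_def)

lemma Wc_add: "Wc c s P \<Longrightarrow> Wc c s Q \<Longrightarrow> Wc c s (P + Q)"
  unfolding Wc_def using keys_add by fastforce

lemma Wc_uminus: "Wc c s P \<Longrightarrow> Wc c s (- P)"
  unfolding Wc_def by (simp add: keys_uminus')

lemma Wc_diff: "Wc c s P \<Longrightarrow> Wc c s Q \<Longrightarrow> Wc c s (P - Q)"
  unfolding Wc_def using keys_diff_sub by fastforce

lemma Wc_sum: "(\<And>i. i \<in> A \<Longrightarrow> Wc c s (f i)) \<Longrightarrow> Wc c s (sum f A)"
  by (induction A rule: infinite_finite_induct) (auto intro: Wc_add)

lemma Wc_mult: assumes "Wc c1 s1 P" "Wc c2 s2 Q" shows "Wc (c1 + c2) (s1 + s2) (P * Q)"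
proof (rule WcI)
  fix d m assume "m \<in> keys (coeff (P * Q) d)"
  moreover have "keys (coeff (P * Q) d) \<subseteq> (\<Union>i\<in>{..d}. keys (coeff P i * coeff Q (d - i)))"
    unfolding coeff_mult by (rule keys_sum_sub)
  ultimately have "m \<in> (\<Union>i\<in>{..d}. keys (coeff P i * coeff Q (d - i)))" by blast
  then obtain i where i: "i \<le> d" "m \<in> keys (coeff P i * coeff Q (d - i))" by auto
  then obtain a b where ab: "m = a + b" "a \<in> keys (coeff P i)" "b \<in> keys (coeff Q (d - i))"
    using keys_mult by blast
  have 1: "int i + c1 \<le> om a s1 \<and> xw a \<le> s1" using WcD[OF assms(1) ab(2)] .
  have 2: "int (d - i) + c2 \<le> om b s2 \<and> xw b \<le> s2" using WcD[OF assms(2) ab(3)] .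
  show "int d + (c1 + c2) \<le> om m (s1 + s2) \<and> xw m \<le> s1 + s2"
    using 1 2 i(1) by (simp add: ab(1) om_add xw_add)
qed

lemma Wc_mult': "Wc c1 s1 P \<Longrightarrow> Wc c2 s2 Q \<Longrightarrow> c = c1 + c2 \<Longrightarrow> s = s1 + s2 \<Longrightarrow> Wc c s (P * Q)"
  using Wc_mult by simp

lemma Wc_const: "(\<And>m. m \<in> keys a \<Longrightarrow> c \<le> om m s \<and> xw m \<le> s) \<Longrightarrow> Wc c s [:a:]"
  by (rule WcI) (auto simp: coeff_pCons split: nat.splits)

lemma Wc_pCons: "Wc c s (pCons a p) \<longleftrightarrow> (\<forall>m\<in>keys a. c \<le> om m s \<and> xw m \<le> s) \<and> Wc (c + 1) s p"
proof
  assume h: "Wc c s (pCons a p)"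
  have "\<forall>m\<in>keys a. c \<le> om m s \<and> xw m \<le> s" using WcD[OF h, of _ 0] by simp
  moreover have "Wc (c + 1) s p"
  proof (rule WcI)
    fix d m assume "m \<in> keys (coeff p d)"
    then show "int d + (c + 1) \<le> om m s \<and> xw m \<le> s" using WcD[OF h, of m "Suc d"] by simp
  qed
  ultimately show "(\<forall>m\<in>keys a. c \<le> om m s \<and> xw m \<le> s) \<and> Wc (c + 1) s p" by blast
next
  assume h: "(\<forall>m\<in>keys a. c \<le> om m s \<and> xw m \<le> s) \<and> Wc (c + 1) s p"
  show "Wc c s (pCons a p)"
  proof (rule WcI)
    fix d m assume m: "m \<in> keys (coeff (pCons a p) d)"
    show "int d + c \<le> om m s \<and> xw m \<le> s"
    proof (cases d)
      case 0 then show ?thesis using h m by simp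
    next
      case (Suc d')
      then have "m \<in> keys (coeff p d')" using m by simp
      then have "int d' + (c + 1) \<le> om m s \<and> xw m \<le> s" using h WcD by blast
      then show ?thesis using Suc by simp
    qed
  qed
qed

definition scal :: "mpoly poly \<Rightarrow> bool" where
  "scal Z \<longleftrightarrow> (\<forall>d. keys (coeff Z d) \<subseteq> {0})"

lemma Wc_scal: "scal Z \<Longrightarrow> degree Z \<le> k \<Longrightarrow> Wc (- int k) 0 Z"
  unfolding Wc_def scal_def
proof (intro allI ballI)
  fix d m assume "\<forall>d. keys (coeff Z d) \<subseteq> {0}" "degree Z \<le> k" "m \<in> keys (coeff Z d)"
  moreover have "coeff Z d \<noteq> 0" using \<open>m \<in> keys (coeff Z d)\<close> by auto
  then have "d \<le> degree Z" by (rule le_degree)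
  moreover have "m = 0" using calculation by blast
  ultimately show "int d + - int k \<le> om m 0 \<and> xw m \<le> 0" by simp
qed

lemma scal_const: "keys a \<subseteq> {0} \<Longrightarrow> scal [:a:]"
  by (auto simp: scal_def coeff_pCons split: nat.splits)

lemma scal_pCons: "keys a \<subseteq> {0} \<Longrightarrow> scal p \<Longrightarrow> scal (pCons a p)"
  by (auto simp: scal_def coeff_pCons split: nat.splits)

lemma Wc_X: "Wc (-1) 0 [:0, 1:]"
  using Wc_scal[of "[:0, 1:]" 1] by (simp add: scal_pCons scal_const)

lemma Wc_X1: "Wc (-1) 0 [:1, 1:]"
  using Wc_scal[of "[:1, 1:]" 1] by (simp add: scal_pCons scal_const)

lemma Wc_pcomp: "Wc c s P \<Longrightarrow> Wc c s (pcompose P [:1, 1:])"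
proof (induction P arbitrary: c)
  case 0 then show ?case by simp
next
  case (pCons a p)
  have h: "(\<forall>m\<in>keys a. c \<le> om m s \<and> xw m \<le> s)" "Wc (c + 1) s p"
    using pCons.prems Wc_pCons by auto
  have "Wc c s [:a:]" using h(1) by (intro Wc_const) auto
  moreover have "Wc c s ([:1, 1:] * pcompose p [:1, 1:])"
    by (rule Wc_mult'[OF Wc_X1 pCons.IH[OF h(2)]]) simp_all
  ultimately have "Wc c s ([:a:] + [:1, 1:] * pcompose p [:1, 1:])" by (rule Wc_add)
  then show ?case by (simp only: pcompose_pCons)
qed

lemma Wc_Xmult: "Wc c s P \<Longrightarrow> Wc (c - 1) s ([:0, 1:] * P)"
  by (rule Wc_mult'[OF Wc_X]) simp_all


lemma pcompose_monom': "pcompose (monom c n) q = smult c (q ^ n)"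
  by (induction n) (simp_all add: monom_Suc pcompose_pCons monom_0)

lemma coeff_X1_pow: "coeff ([:1, 1:] ^ i) k = (of_nat (i choose k) :: 'a::comm_semiring_1)"
proof (cases "k \<le> i")
  case True then show ?thesis using coeff_linear_poly_power[of k i "1::'a" 1] by simp
next
  case False
  have "degree ([:1::'a, 1:] ^ i) = i" using degree_linear_power[of "1::'a" i] by simp
  then show ?thesis using False by (simp add: coeff_eq_0 binomial_eq_0)
qed

lemma coeff_pcomp_X1:
  fixes Q :: "'a::comm_semiring_1 poly"
  assumes "degree Q \<le> D"
  shows "coeff (pcompose Q [:1, 1:]) k = (\<Sum>i\<le>D. coeff Q i * of_nat (i choose k))"
proof -
  have "pcompose Q [:1, 1:] = pcompose (\<Sum>i\<le>D. monom (coeff Q i) i) [:1, 1:]"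
    using poly_as_sum_of_monoms'[OF assms] by simp
  also have "\<dots> = (\<Sum>i\<le>D. smult (coeff Q i) ([:1, 1:] ^ i))"
    by (simp add: pcompose_sum pcompose_monom')
  finally show ?thesis by (simp add: coeff_sum coeff_X1_pow)
qed

lemma coeff_pcomp_X1_top:
  fixes Q :: "'a::comm_semiring_1 poly"
  assumes "degree Q \<le> D"
  shows "coeff (pcompose Q [:1, 1:]) D = coeff Q D"
proof -
  have "coeff (pcompose Q [:1, 1:]) D = (\<Sum>i\<le>D. coeff Q i * of_nat (i choose D))"
    by (rule coeff_pcomp_X1[OF assms])
  also have "\<dots> = (\<Sum>i\<in>{D}. coeff Q i * of_nat (i choose D))"
    by (rule sum.mono_neutral_right) (auto simp: binomial_eq_0)
  finally show ?thesis by simp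
qed

lemma coeff_pcomp_X1_diff:
  fixes Q :: "'a::comm_ring_1 poly"
  assumes "degree Q \<le> D" "0 < D"
  shows "coeff (pcompose Q [:1, 1:] - Q) (D - 1) = of_nat D * coeff Q D"
proof -
  have "coeff (pcompose Q [:1, 1:]) (D - 1) = (\<Sum>i\<le>D. coeff Q i * of_nat (i choose (D - 1)))"
    by (rule coeff_pcomp_X1[OF assms(1)])
  also have "\<dots> = (\<Sum>i\<in>{D - 1, D}. coeff Q i * of_nat (i choose (D - 1)))"
  proof (rule sum.mono_neutral_right)
    show "\<forall>i\<in>{..D} - {D - 1, D}. coeff Q i * of_nat (i choose (D - 1)) = 0"
    proof
      fix i assume "i \<in> {..D} - {D - 1, D}"
      then have "i < D - 1" by auto
      then show "coeff Q i * of_nat (i choose (D - 1)) = 0" by (simp add: binomial_eq_0)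
    qed
  qed auto
  also have "\<dots> = coeff Q (D - 1) + coeff Q D * of_nat D"
  proof -
    have "D - 1 \<noteq> D" using assms(2) by simp
    moreover have "D choose (D - 1) = D" using assms(2) by (subst binomial_symmetric) auto
    ultimately show ?thesis by simp
  qed
  finally show ?thesis by (simp add: mult.commute)
qed

lemma rat_poly_eq_nat:
  fixes p q :: "rat poly"
  assumes "\<And>j. j \<ge> 1 \<Longrightarrow> poly p (of_nat j) = poly q (of_nat j)"
  shows "p = q"
proof (rule ccontr)
  assume "p \<noteq> q"
  then have "p - q \<noteq> 0" by simp
  then have fin: "finite {x. poly (p - q) x = 0}" by (rule poly_roots_finite)
  have "of_nat ` {1..} \<subseteq> {x. poly (p - q) x = 0}" using assms by auto
  then have "finite (of_nat ` {1..} :: rat set)" using fin finite_subset by blast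
  moreover have "inj_on (of_nat :: nat \<Rightarrow> rat) {1..}" by (simp add: inj_on_def)
  ultimately have "finite ({1..} :: nat set)" using finite_imageD by blast
  then obtain b where "\<forall>x\<in>{1::nat..}. x \<le> b" using finite_nat_set_iff_bounded_le by blast
  then have "Suc b \<le> b" by auto
  then show False by simp
qed

section \<open>Projections to rational polynomials\<close>

definition Lm :: "(nat \<Rightarrow>\<^sub>0 nat) \<Rightarrow> mpoly poly \<Rightarrow> rat poly" where
  "Lm m P = map_poly (\<lambda>c. lookup c m) P"

lemma coeff_Lm[simp]: "coeff (Lm m P) d = lookup (coeff P d) m"
  by (simp add: Lm_def coeff_map_poly)

lemma Lm_add: "Lm m (P + Q) = Lm m P + Lm m Q"
  by (rule poly_eqI) (simp add: lookup_add)

lemma Lm_diff: "Lm m (P - Q) = Lm m P - Lm m Q"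
  by (rule poly_eqI) (simp add: lookup_minus)

lemma Lm_uminus: "Lm m (- P) = - Lm m P"
  by (rule poly_eqI) (simp add: lookup_uminus)

lemma Lm_zero[simp]: "Lm m 0 = 0"
  by (rule poly_eqI) simp

lemma Lm_sum: "Lm m (sum f A) = (\<Sum>i\<in>A. Lm m (f i))"
  by (rule poly_eqI) (simp add: coeff_sum lookup_sum)

lemma Lm_pCons: "Lm m (pCons a p) = pCons (lookup a m) (Lm m p)"
  by (rule poly_eqI) (simp add: coeff_pCons split: nat.splits)

lemma mult_const_right: "P * [:c:] = smult c P"
  by (simp add: mult.commute)

lemma Lm_mult_const_0: "Lm 0 (P * [:c:]) = smult (lookup c 0) (Lm 0 P)"
  by (rule poly_eqI) (simp add: mult_const_right lookup_mult_0)

lemma Lm_mult_const_e: "Lm (ee t) (P * [:c:]) =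
   smult (lookup c (ee t)) (Lm 0 P) + smult (lookup c 0) (Lm (ee t) P)"
  by (rule poly_eqI) (simp add: mult_const_right lookup_mult_e algebra_simps)

lemma Lm_Xmult: "Lm m ([:0, 1:] * P) = [:0, 1:] * Lm m P"
  by (simp add: Lm_pCons)

lemma X1_mult: "[:1, 1:] * (Y::'a::comm_semiring_1 poly) = Y + pCons 0 Y"
  by simp

lemma Lm_pcomp: "Lm m (pcompose P [:1, 1:]) = pcompose (Lm m P) [:1, 1:]"
proof (induction P)
  case 0 then show ?case by simp
next
  case (pCons a p)
  have "Lm m (pcompose (pCons a p) [:1, 1:]) = Lm m ([:a:] + [:1, 1:] * pcompose p [:1, 1:])"
    by (simp only: pcompose_pCons)
  also have "\<dots> = [:lookup a m:] + [:1, 1:] * Lm m (pcompose p [:1, 1:])"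
    by (simp only: Lm_add X1_mult Lm_pCons) simp
  also have "\<dots> = pcompose (pCons (lookup a m) (Lm m p)) [:1, 1:]"
    by (simp only: pcompose_pCons pCons.IH)
  finally show ?case by (simp only: Lm_pCons)
qed

lemma lookup_of_nat_mult: "lookup (of_nat j * (y::mpoly)) m = of_nat j * lookup y m"
  using lookup_mult_of_nat[of y j m] by (simp add: mult.commute)

lemma poly_Lm: "poly (Lm m P) (of_nat j) = lookup (poly P (of_nat j)) m"
  by (induction P) (simp_all add: Lm_pCons lookup_add lookup_of_nat_mult)

lemma Lm_deg: "Wc c s P \<Longrightarrow> coeff (Lm m P) d \<noteq> 0 \<Longrightarrow> int d + c \<le> om m s"
  using WcD[of c s P m d] by (simp add: in_keys_iff)

lemma Lm_degree: "Wc c s P \<Longrightarrow> 0 \<le> om m s - c \<Longrightarrow> degree (Lm m P) \<le> nat (om m s - c)"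
proof (rule ccontr)
  assume h: "Wc c s P" "0 \<le> om m s - c" "\<not> degree (Lm m P) \<le> nat (om m s - c)"
  then have "Lm m P \<noteq> 0" by auto
  then have "coeff (Lm m P) (degree (Lm m P)) \<noteq> 0" using leading_coeff_0_iff by blast
  then have "int (degree (Lm m P)) + c \<le> om m s" using Lm_deg[OF h(1)] by blast
  then show False using h(2,3) by linarith
qed

lemma Lm_zero_neg: "Wc c s P \<Longrightarrow> om m s - c < 0 \<Longrightarrow> Lm m P = 0"
proof (rule ccontr)
  assume h: "Wc c s P" "om m s - c < 0" "Lm m P \<noteq> 0"
  then have "coeff (Lm m P) (degree (Lm m P)) \<noteq> 0" using leading_coeff_0_iff by blast
  then have "int (degree (Lm m P)) + c \<le> om m s" using Lm_deg[OF h(1)] by blast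
  then show False using h(2) by linarith
qed


section \<open>Antidifferences\<close>

lemma binom_plus1: "((x::rat) + 1) ^ Suc d = x ^ Suc d + of_nat (Suc d) * x ^ d + (\<Sum>k<d. of_nat (Suc d choose k) * x ^ k)"
proof -
  have "(x + 1) ^ Suc d = (\<Sum>k\<le>Suc d. of_nat (Suc d choose k) * x ^ k)"
    using binomial_ring[of x 1 "Suc d"] by simp
  also have "\<dots> = x ^ Suc d + of_nat (Suc d choose d) * x ^ d + (\<Sum>k<d. of_nat (Suc d choose k) * x ^ k)"
    by (simp add: sum.atMost_Suc lessThan_Suc_atMost[symmetric] sum.lessThan_Suc)
  also have "Suc d choose d = Suc d" by (subst binomial_symmetric) auto
  finally show ?thesis by simp
qed

lemma exists_antidiff: "\<exists>A::rat poly. degree A \<le> Suc d \<and> poly A 0 = 0 \<and> (\<forall>x. poly A (x + 1) - poly A x = x ^ d)"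
proof (induction d rule: less_induct)
  case (less d)
  then have "\<forall>k\<in>{..<d}. \<exists>A::rat poly. degree A \<le> Suc k \<and> poly A 0 = 0 \<and> (\<forall>x. poly A (x + 1) - poly A x = x ^ k)"
    by auto
  then have "\<exists>F. \<forall>k\<in>{..<d}. degree (F k) \<le> Suc k \<and> poly (F k) 0 = 0 \<and> (\<forall>x::rat. poly (F k) (x + 1) - poly (F k) x = x ^ k)"
    by (rule bchoice)
  then obtain F where F0: "\<forall>k\<in>{..<d}. degree (F k) \<le> Suc k \<and> poly (F k) 0 = 0 \<and> (\<forall>x::rat. poly (F k) (x + 1) - poly (F k) x = x ^ k)"
    by blast
  then have F: "\<And>k. k < d \<Longrightarrow> degree (F k) \<le> Suc k \<and> poly (F k) 0 = 0 \<and> (\<forall>x. poly (F k) (x + 1) - poly (F k) x = x ^ k)"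
    by auto
  define A where "A = smult (1 / of_nat (Suc d)) (monom 1 (Suc d) - (\<Sum>k<d. smult (of_nat (Suc d choose k)) (F k)))"
  have "degree A \<le> Suc d"
  proof -
    have "degree (\<Sum>k<d. smult (of_nat (Suc d choose k)) (F k)) \<le> Suc d"
    proof (rule degree_sum_le)
      fix k assume "k \<in> {..<d}"
      then show "degree (smult (of_nat (Suc d choose k)) (F k)) \<le> Suc d"
        using F[of k] degree_smult_le[of _ "F k"] by (meson le_trans lessThan_iff less_imp_le_nat not_less_eq_eq)
    qed simp
    moreover have "degree (monom (1::rat) (Suc d)) \<le> Suc d" by (simp add: degree_monom_le)
    ultimately show ?thesis unfolding A_def
      by (meson degree_diff_le degree_smult_le le_trans)
  qed
  moreover have "poly A 0 = 0"
    unfolding A_def using F by (simp add: poly_sum poly_monom)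
  moreover have "poly A (x + 1) - poly A x = x ^ d" for x
  proof -
    have s: "(\<Sum>k<d. of_nat (Suc d choose k) * poly (F k) (x + 1)) - (\<Sum>k<d. of_nat (Suc d choose k) * poly (F k) x)
        = (\<Sum>k<d. of_nat (Suc d choose k) * x ^ k)"
      by (simp add: sum_subtractf[symmetric] right_diff_distrib[symmetric] F)
    have "poly A (x + 1) - poly A x = 1 / of_nat (Suc d) * (((x + 1) ^ Suc d - x ^ Suc d) -
        ((\<Sum>k<d. of_nat (Suc d choose k) * poly (F k) (x + 1)) - (\<Sum>k<d. of_nat (Suc d choose k) * poly (F k) x)))"
      unfolding A_def by (simp add: poly_sum poly_monom algebra_simps)
    also have "\<dots> = 1 / of_nat (Suc d) * (of_nat (Suc d) * x ^ d)"
      unfolding s binom_plus1 by simp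
    also have "\<dots> = x ^ d" by simp
    finally show ?thesis .
  qed
  ultimately show ?case by blast
qed

lemma mconst_add: "mconst (a + b) = mconst a + mconst b" by (simp add: mconst_def single_add)
lemma mconst_mult: "mconst (a * b) = mconst a * mconst b" by (simp add: mconst_def mult_single)
lemma mconst_of_nat: "mconst (of_nat j) = of_nat j" by (simp add: mconst_def)
lemma mconst_0[simp]: "mconst 0 = 0" by (simp add: mconst_def)

lemma poly_map_mconst: "poly (map_poly mconst p) (of_nat j) = mconst (poly p (of_nat j))"
proof (induction p)
  case 0 then show ?case by simp
next
  case (pCons a p)
  then have "map_poly mconst (pCons a p) = pCons (mconst a) (map_poly mconst p)"
    by (simp add: map_poly_pCons)
  then show ?case using pCons by (simp add: mconst_add mconst_mult mconst_of_nat)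
qed

lemma coeff_map_mconst: "coeff (map_poly mconst p) k = mconst (coeff p k)"
  by (simp add: coeff_map_poly)

lemma antidiff:
  fixes f :: "nat \<Rightarrow> mpoly"
  assumes rec: "\<And>j. f (Suc j) - f j = poly R (of_nat j)"
    and WR: "Wc 1 s R"
    and f0: "\<And>m. m \<in> keys (f 0) \<Longrightarrow> 0 \<le> om m s \<and> xw m \<le> s"
  shows "\<exists>P. (\<forall>j. f j = poly P (of_nat j)) \<and> Wc 0 s P"
proof -
  have "\<exists>A. \<forall>d. degree (A d) \<le> Suc d \<and> poly (A d) 0 = 0 \<and> (\<forall>x::rat. poly (A d) (x + 1) - poly (A d) x = x ^ d)"
    by (rule choice) (use exists_antidiff in blast)
  then obtain A where A0: "\<forall>d. degree (A d) \<le> Suc d \<and> poly (A d) 0 = 0 \<and> (\<forall>x::rat. poly (A d) (x + 1) - poly (A d) x = x ^ d)"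
    by blast
  then have A: "\<And>d. degree (A d) \<le> Suc d" "\<And>d. poly (A d) 0 = 0"
      "\<And>d x. poly (A d) (x + 1) - poly (A d) x = x ^ d"
    by auto
  define S where "S = (\<Sum>d\<le>degree R. smult (coeff R d) (map_poly mconst (A d)))"
  have polyS: "poly S (of_nat j) = (\<Sum>d\<le>degree R. coeff R d * mconst (poly (A d) (of_nat j)))" for j
    by (simp add: S_def poly_sum poly_map_mconst)
  have Sstep: "poly S (of_nat (Suc j)) - poly S (of_nat j) = poly R (of_nat j)" for j
  proof -
    have "poly S (of_nat (Suc j)) - poly S (of_nat j) =
      (\<Sum>d\<le>degree R. coeff R d * mconst (poly (A d) (of_nat j + 1) - poly (A d) (of_nat j)))"
      unfolding polyS by (simp add: sum_subtractf[symmetric] right_diff_distrib[symmetric] mconst_def single_diff add.commute)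
    also have "\<dots> = (\<Sum>d\<le>degree R. coeff R d * of_nat j ^ d)"
      unfolding A(3) by (simp add: mconst_of_nat flip: of_nat_power)
    also have "\<dots> = poly R (of_nat j)" by (simp add: poly_altdef)
    finally show ?thesis .
  qed
  have S0: "poly S 0 = 0" using A(2) polyS[of 0] by simp
  define P where "P = [:f 0:] + S"
  have "f j = poly P (of_nat j)" for j
  proof (induction j)
    case 0 then show ?case using S0 by (simp add: P_def)
  next
    case (Suc j)
    have "f (Suc j) = f j + poly R (of_nat j)" using rec[of j] by (simp add: algebra_simps)
    also have "\<dots> = poly P (of_nat j) + (poly S (of_nat (Suc j)) - poly S (of_nat j))"
      using Suc Sstep by simp
    also have "\<dots> = poly P (of_nat (Suc j))" by (simp add: P_def)
    finally show ?case .
  qed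
  moreover have "Wc 0 s P"
  proof -
    have "Wc 0 s [:f 0:]" using f0 by (intro Wc_const) auto
    moreover have "Wc 0 s S"
    proof (rule WcI)
      fix k m assume m: "m \<in> keys (coeff S k)"
      have eq: "coeff S k = (\<Sum>d\<le>degree R. coeff R d * mconst (coeff (A d) k))"
        by (simp add: S_def coeff_sum coeff_map_mconst)
      have "keys (coeff S k) \<subseteq> (\<Union>d\<in>{..degree R}. keys (coeff R d * mconst (coeff (A d) k)))"
        unfolding eq by (rule keys_sum_sub)
      then obtain d where d: "m \<in> keys (coeff R d * mconst (coeff (A d) k))" using m by blast
      have "coeff (A d) k \<noteq> 0"
      proof
        assume "coeff (A d) k = 0"
        then have "coeff R d * mconst (coeff (A d) k) = 0" by simp
        then show False using d by (metis empty_iff keys_zero)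
      qed
      then have "k \<le> degree (A d)" by (rule le_degree)
      then have "k \<le> Suc d" using A(1)[of d] by linarith
      moreover have "m \<in> keys (coeff R d)" using d keys_mult_const unfolding mconst_def by blast
      then have "int d + 1 \<le> om m s \<and> xw m \<le> s" using WcD[OF WR] by blast
      ultimately show "int k + 0 \<le> om m s \<and> xw m \<le> s" by linarith
    qed
    ultimately show ?thesis unfolding P_def by (rule Wc_add)
  qed
  ultimately show ?thesis by blast
qed


section \<open>Power series\<close>

lemma fps_inv1_eq: assumes "f * g = 1" shows "fps_inv1 f = g"
  unfolding fps_inv1_def
proof (rule the_equality)
  fix h assume "f * h = 1"
  then have "g * (f * h) = g" by simp
  then show "h = g" using assms by (simp add: mult.assoc[symmetric] mult.commute)
qed (rule assms)

lemma fps_inv1_right: assumes "f $ 0 = 1" shows "f * fps_inv1 f = 1"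
proof -
  have "f * fps_right_inverse f 1 = 1" by (rule fps_right_inverse) (simp add: assms)
  then show ?thesis using fps_inv1_eq by metis
qed

lemma ring_rec: assumes "(a::'a::comm_ring_1) * (1 + c) = b * (1 + d)" shows "a - b = b * d - c * a"
proof -
  have "a - b = (a * (1 + c) - a * c) - b" by (simp add: algebra_simps)
  also have "\<dots> = b * (1 + d) - a * c - b" using assms by simp
  also have "\<dots> = b * d - c * a" by (simp add: algebra_simps)
  finally show ?thesis .
qed

abbreviation "Bser \<equiv> aser * fps_X ^ 2"

lemma aser_nth[simp]: "aser $ k = mvar k" by (simp add: aser_def)

lemma Bser_0: "Bser $ 0 = 0"
  by (simp add: fps_X_power_mult_right_nth)

lemma E0: "(1 + Bser) $ 0 = 1" by (simp add: Bser_0)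

lemma lin0: "(1 + of_nat j * fps_X :: mpoly fps) $ 0 = 1"
  by (simp add: fps_of_nat[symmetric])

lemma lin0': "(1 + of_int i * fps_X :: mpoly fps) $ 0 = 1"
  by (simp add: fps_of_int[symmetric])

abbreviation "Gp k \<equiv> Gser (Suc k)"
abbreviation "Hp k \<equiv> Hser (Suc k)"

lemma Gp_0: "Gp 0 = 1 + Bser"
proof -
  have "fps_inv1 (1 + of_nat 0 * fps_X :: mpoly fps) = 1" by (rule fps_inv1_eq) simp
  then show ?thesis by (simp add: Gser_def)
qed

lemma Hp_0: "Hp 0 = 1" by (simp add: Hser_def)

lemma Grec: "Gp (Suc k) * (1 + of_nat (Suc k) * fps_X) = Gp k * (1 + Bser)"
proof -
  define L :: "mpoly fps" where "L = 1 + of_nat (Suc k) * fps_X"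
  have h1: "Gp (Suc k) = Gp k * ((1 + Bser) * fps_inv1 L)"
    by (simp add: Gser_def L_def)
  have h2: "L * fps_inv1 L = 1"
    unfolding L_def by (rule fps_inv1_right[OF lin0])
  have "Gp (Suc k) * L = Gp k * (1 + Bser) * (L * fps_inv1 L)" unfolding h1 by (simp only: mult_ac)
  also have "\<dots> = Gp k * (1 + Bser)" unfolding h2 by simp
  finally show ?thesis unfolding L_def .
qed

lemma Hset_Suc: "{1 - int (Suc (Suc k)) .. -1} = insert (- int (Suc k)) {1 - int (Suc k) .. -1}"
  by auto

lemma Hrec: "Hp (Suc k) * (1 + Bser) = Hp k * (1 - of_nat (Suc k) * fps_X)"
proof -
  have "- int (Suc k) \<notin> {1 - int (Suc k) .. -1}" by auto
  then have h1: "Hp (Suc k) = (1 + of_int (- int (Suc k)) * fps_X) * fps_inv1 (1 + Bser) * Hp k"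
    unfolding Hser_def Hset_Suc by (simp add: prod.insert)
  have h2: "(1 + Bser) * fps_inv1 (1 + Bser) = 1" by (rule fps_inv1_right[OF E0])
  have h3: "(1 + of_int (- int (Suc k)) * fps_X :: mpoly fps) = 1 - of_nat (Suc k) * fps_X" by (simp add: algebra_simps)
  have "Hp (Suc k) * (1 + Bser) = Hp k * (1 + of_int (- int (Suc k)) * fps_X) * ((1 + Bser) * fps_inv1 (1 + Bser))"
    unfolding h1 by (simp only: mult_ac)
  also have "\<dots> = Hp k * (1 - of_nat (Suc k) * fps_X)" unfolding h2 h3 by simp
  finally show ?thesis .
qed

lemma Gdiff: "Gp (Suc k) - Gp k = Gp k * Bser - of_nat (Suc k) * fps_X * Gp (Suc k)"
  using ring_rec[OF Grec] by (simp add: mult.assoc)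

lemma Hdiff: "Hp (Suc k) - Hp k = - (Hp (Suc k) * Bser) - of_nat (Suc k) * fps_X * Hp k"
proof -
  have "Hp (Suc k) * (1 + Bser) = Hp k * (1 + (- (of_nat (Suc k) * fps_X)))" using Hrec by simp
  from ring_rec[OF this] show ?thesis by (simp add: algebra_simps)
qed

lemma mult_B_nth: "(F * Bser) $ s = (if s < 2 then 0 else (\<Sum>i=0..s-2. F $ i * mvar (s - 2 - i)))"
proof -
  have "(F * Bser) $ s = (F * aser * fps_X ^ 2) $ s" by (simp add: mult.assoc)
  also have "\<dots> = (if s < 2 then 0 else (F * aser) $ (s - 2))" by (rule fps_X_power_mult_right_nth)
  finally show ?thesis by (simp add: fps_mult_nth)
qed

lemma mult_jX_nth: "(of_nat j * fps_X * F :: mpoly fps) $ s = (if s = 0 then 0 else of_nat j * F $ (s - 1))"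
proof -
  have eq: "(of_nat j * fps_X * F :: mpoly fps) = fps_const (of_nat j) * (fps_X * F)"
    by (simp only: fps_of_nat mult.assoc)
  show ?thesis by (simp only: eq fps_mult_left_const_nth fps_X_mult_nth) simp
qed


section \<open>Polynomial representation of coefficient families\<close>

definition rep :: "(nat \<Rightarrow> mpoly fps) \<Rightarrow> nat \<Rightarrow> mpoly poly \<Rightarrow> bool" where
  "rep F s P \<longleftrightarrow> (\<forall>k. F k $ s = poly P (of_nat k))"

definition PP :: "(nat \<Rightarrow> mpoly fps) \<Rightarrow> nat \<Rightarrow> mpoly poly" where
  "PP F s = (SOME P. rep F s P \<and> Wc 0 s P)"

lemma PP_good: "rep F s P \<Longrightarrow> Wc 0 s P \<Longrightarrow> rep F s (PP F s) \<and> Wc 0 s (PP F s)"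
  unfolding PP_def by (rule someI) blast

lemma Wc_mvar: "Wc 1 (k + 2) [:mvar k:]"
  by (rule Wc_const) (simp add: keys_mvar)

lemma poly_X1: "poly [:1, 1:] (of_nat k :: 'a::comm_semiring_1) = of_nat (Suc k)" by simp

lemma poly_pcomp_X1: "poly (pcompose P [:1, 1:]) (of_nat k :: 'a::comm_semiring_1) = poly P (of_nat (Suc k))"
  by (simp add: poly_pcompose add.commute)

definition RG :: "nat \<Rightarrow> mpoly poly" where
  "RG s = (if s < 2 then 0 else (\<Sum>i=0..s-2. PP Gp i * [:mvar (s - 2 - i):]))
      - (if s = 0 then 0 else [:1, 1:] * pcompose (PP Gp (s - 1)) [:1, 1:])"

definition RH :: "nat \<Rightarrow> mpoly poly" where
  "RH s = - (if s < 2 then 0 else (\<Sum>i=0..s-2. pcompose (PP Hp i) [:1, 1:] * [:mvar (s - 2 - i):]))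
      - (if s = 0 then 0 else [:1, 1:] * PP Hp (s - 1))"

lemma Wc_term: "Wc 0 i P \<Longrightarrow> i \<le> s - 2 \<Longrightarrow> 2 \<le> s \<Longrightarrow> Wc 1 s (P * [:mvar (s - 2 - i):])"
  by (rule Wc_mult'[OF _ Wc_mvar]) auto

lemma Wc_RG: assumes "\<And>i. i < s \<Longrightarrow> Wc 0 i (PP Gp i)" shows "Wc 1 s (RG s)"
proof -
  have 1: "Wc 1 s (if s < 2 then 0 else (\<Sum>i=0..s-2. PP Gp i * [:mvar (s - 2 - i):]))"
  proof (cases "s < 2")
    case False
    have "Wc 1 s (\<Sum>i=0..s-2. PP Gp i * [:mvar (s - 2 - i):])"
    proof (rule Wc_sum)
      fix i assume "i \<in> {0..s-2}"
      then show "Wc 1 s (PP Gp i * [:mvar (s - 2 - i):])" using False by (intro Wc_term assms) auto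
    qed
    then show ?thesis using False by (simp only: if_False)
  qed simp
  have 2: "Wc 1 s (if s = 0 then 0 else [:1, 1:] * pcompose (PP Gp (s - 1)) [:1, 1:])"
  proof (cases "s = 0")
    case False
    have "Wc (-1) (s - 1) ([:1, 1:] * pcompose (PP Gp (s - 1)) [:1, 1:])"
      by (rule Wc_mult'[OF Wc_X1 Wc_pcomp[OF assms]]) (use False in auto)
    from Wc_idx[OF this, of s] False show ?thesis by simp
  qed simp
  show ?thesis unfolding RG_def by (rule Wc_diff[OF 1 2])
qed

lemma Wc_RH: assumes "\<And>i. i < s \<Longrightarrow> Wc 0 i (PP Hp i)" shows "Wc 1 s (RH s)"
proof -
  have 1: "Wc 1 s (if s < 2 then 0 else (\<Sum>i=0..s-2. pcompose (PP Hp i) [:1, 1:] * [:mvar (s - 2 - i):]))"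
  proof (cases "s < 2")
    case False
    have "Wc 1 s (\<Sum>i=0..s-2. pcompose (PP Hp i) [:1, 1:] * [:mvar (s - 2 - i):])"
    proof (rule Wc_sum)
      fix i assume "i \<in> {0..s-2}"
      then show "Wc 1 s (pcompose (PP Hp i) [:1, 1:] * [:mvar (s - 2 - i):])" using False by (intro Wc_term Wc_pcomp assms) auto
    qed
    then show ?thesis using False by (simp only: if_False)
  qed simp
  have 2: "Wc 1 s (if s = 0 then 0 else [:1, 1:] * PP Hp (s - 1))"
  proof (cases "s = 0")
    case False
    have "Wc (-1) (s - 1) ([:1, 1:] * PP Hp (s - 1))"
      by (rule Wc_mult'[OF Wc_X1 assms]) (use False in auto)
    from Wc_idx[OF this, of s] False show ?thesis by simp
  qed simp
  show ?thesis unfolding RH_def by (rule Wc_diff[OF Wc_uminus[OF 1] 2])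
qed

lemma rep_RG: assumes "\<And>i. i < s \<Longrightarrow> rep Gp i (PP Gp i)"
  shows "Gp (Suc k) $ s - Gp k $ s = poly (RG s) (of_nat k)"
proof -
  have "Gp (Suc k) $ s - Gp k $ s = (Gp k * Bser) $ s - (of_nat (Suc k) * fps_X * Gp (Suc k)) $ s"
    using arg_cong[OF Gdiff[of k], of "\<lambda>F. F $ s"] by simp
  also have "\<dots> = (if s < 2 then 0 else (\<Sum>i=0..s-2. Gp k $ i * mvar (s - 2 - i)))
      - (if s = 0 then 0 else of_nat (Suc k) * Gp (Suc k) $ (s - 1))"
    by (simp only: mult_B_nth mult_jX_nth)
  also have "\<dots> = poly (RG s) (of_nat k)"
  proof -
    have a: "(\<Sum>i=0..s-2. Gp k $ i * mvar (s - 2 - i)) = (\<Sum>i=0..s-2. poly (PP Gp i) (of_nat k) * mvar (s - 2 - i))"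
      if "2 \<le> s" using assms that by (intro sum.cong) (auto simp: rep_def)
    have b: "Gp (Suc k) $ (s - 1) = poly (PP Gp (s - 1)) (of_nat (Suc k))" if "s \<noteq> 0"
      using assms[of "s - 1"] that by (auto simp: rep_def)
    show ?thesis unfolding RG_def using a b
      by (simp add: poly_sum poly_pcomp_X1 algebra_simps)
  qed
  finally show ?thesis .
qed

lemma rep_RH: assumes "\<And>i. i < s \<Longrightarrow> rep Hp i (PP Hp i)"
  shows "Hp (Suc k) $ s - Hp k $ s = poly (RH s) (of_nat k)"
proof -
  have "Hp (Suc k) $ s - Hp k $ s = - ((Hp (Suc k) * Bser) $ s) - (of_nat (Suc k) * fps_X * Hp k) $ s"
    using arg_cong[OF Hdiff[of k], of "\<lambda>F. F $ s"] by simp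
  also have "\<dots> = - (if s < 2 then 0 else (\<Sum>i=0..s-2. Hp (Suc k) $ i * mvar (s - 2 - i)))
      - (if s = 0 then 0 else of_nat (Suc k) * Hp k $ (s - 1))"
    by (simp only: mult_B_nth mult_jX_nth)
  also have "\<dots> = poly (RH s) (of_nat k)"
  proof -
    have a: "(\<Sum>i=0..s-2. Hp (Suc k) $ i * mvar (s - 2 - i)) = (\<Sum>i=0..s-2. poly (pcompose (PP Hp i) [:1, 1:]) (of_nat k) * mvar (s - 2 - i))"
      if "2 \<le> s" using assms that by (intro sum.cong) (auto simp: rep_def poly_pcomp_X1 simp del: of_nat_Suc)
    have b: "Hp k $ (s - 1) = poly (PP Hp (s - 1)) (of_nat k)" if "s \<noteq> 0"
      using assms[of "s - 1"] that by (auto simp: rep_def)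
    show ?thesis unfolding RH_def using a b
      by (cases "s = 1") (simp_all add: poly_sum algebra_simps)
  qed
  finally show ?thesis .
qed

lemma E_nth: "(1 + Bser) $ s = (if s = 0 then 1 else 0) + (if s < 2 then 0 else mvar (s - 2))"
  by (simp add: fps_X_power_mult_right_nth)

lemma E_keys: "m \<in> keys ((1 + Bser) $ s) \<Longrightarrow> 0 \<le> om m s \<and> xw m \<le> s"
proof -
  assume m: "m \<in> keys ((1 + Bser) $ s)"
  consider "s = 0" | "s = 1" | "2 \<le> s" by linarith
  then show ?thesis
  proof cases
    case 1 then show ?thesis using m by (simp add: E_nth)
  next
    case 2 then show ?thesis using m by (simp add: E_nth)
  next
    case 3
    have "(1 + Bser) $ s = mvar (s - 2)" unfolding E_nth using 3 by simp
    then have "m = ee (s - 2)" using m by (simp add: keys_mvar)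
    then show ?thesis using 3 by simp
  qed
qed

lemma G_good: "rep Gp s (PP Gp s) \<and> Wc 0 s (PP Gp s)"
proof (induction s rule: less_induct)
  case (less s)
  have "\<exists>P. (\<forall>k. Gp k $ s = poly P (of_nat k)) \<and> Wc 0 s P"
  proof (rule antidiff[where R = "RG s"])
    show "Gp (Suc k) $ s - Gp k $ s = poly (RG s) (of_nat k)" for k
      using rep_RG less by blast
    show "Wc 1 s (RG s)" using Wc_RG less by blast
    show "0 \<le> om m s \<and> xw m \<le> s" if "m \<in> keys (Gp 0 $ s)" for m
      using that E_keys by (simp only: Gp_0)
  qed
  then obtain P where "rep Gp s P" "Wc 0 s P" unfolding rep_def by blast
  then show ?case by (rule PP_good)
qed

lemma H_good: "rep Hp s (PP Hp s) \<and> Wc 0 s (PP Hp s)"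
proof (induction s rule: less_induct)
  case (less s)
  have "\<exists>P. (\<forall>k. Hp k $ s = poly P (of_nat k)) \<and> Wc 0 s P"
  proof (rule antidiff[where R = "RH s"])
    show "Hp (Suc k) $ s - Hp k $ s = poly (RH s) (of_nat k)" for k
      using rep_RH less by blast
    show "Wc 1 s (RH s)" using Wc_RH less by blast
    show "0 \<le> om m s \<and> xw m \<le> s" if "m \<in> keys (Hp 0 $ s)" for m
      using that by (cases "s = 0") (simp_all add: Hp_0)
  qed
  then obtain P where "rep Hp s P" "Wc 0 s P" unfolding rep_def by blast
  then show ?case by (rule PP_good)
qed


section \<open>Top coefficients\<close>

lemma Lm_eq_of_poly_eq: "(\<And>k. poly P (of_nat k) = poly Q (of_nat k)) \<Longrightarrow> Lm m P = Lm m Q"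
  by (rule rat_poly_eq_nat) (simp add: poly_Lm)

lemma LG: "pcompose (Lm m (PP Gp s)) [:1, 1:] - Lm m (PP Gp s) = Lm m (RG s)"
proof -
  have "Lm m (pcompose (PP Gp s) [:1, 1:] - PP Gp s) = Lm m (RG s)"
  proof (rule Lm_eq_of_poly_eq)
    fix k
    have "\<And>i. rep Gp i (PP Gp i)" using G_good by blast
    then show "poly (pcompose (PP Gp s) [:1, 1:] - PP Gp s) (of_nat k) = poly (RG s) (of_nat k)"
      using rep_RG[of s k] by (simp add: poly_pcomp_X1 rep_def del: of_nat_Suc)
  qed
  then show ?thesis by (simp add: Lm_diff Lm_pcomp)
qed

lemma LH: "pcompose (Lm m (PP Hp s)) [:1, 1:] - Lm m (PP Hp s) = Lm m (RH s)"
proof -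
  have "Lm m (pcompose (PP Hp s) [:1, 1:] - PP Hp s) = Lm m (RH s)"
  proof (rule Lm_eq_of_poly_eq)
    fix k
    have "\<And>i. rep Hp i (PP Hp i)" using H_good by blast
    then show "poly (pcompose (PP Hp s) [:1, 1:] - PP Hp s) (of_nat k) = poly (RH s) (of_nat k)"
      using rep_RH[of s k] by (simp add: poly_pcomp_X1 rep_def del: of_nat_Suc)
  qed
  then show ?thesis by (simp add: Lm_diff Lm_pcomp)
qed

lemma WG: "Wc 0 s (PP Gp s)" using G_good by blast
lemma WH: "Wc 0 s (PP Hp s)" using H_good by blast

lemma deg0: "Wc 0 s P \<Longrightarrow> degree (Lm 0 P) \<le> 2 * s"
  using Lm_degree[of 0 s P 0] by simp

lemma dege: "Wc 0 s P \<Longrightarrow> t + 2 \<le> s \<Longrightarrow> degree (Lm (ee t) P) \<le> 2 * s - 2 * t - 3"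
  using Lm_degree[of 0 s P "ee t"] by simp

lemma zeroe: "Wc 0 s P \<Longrightarrow> s \<le> t + 1 \<Longrightarrow> Lm (ee t) P = 0"
  using Lm_zero_neg[of 0 s P "ee t"] by simp

lemma coeff_X1_mult_Suc: "coeff ([:1, 1:] * (Q::rat poly)) (Suc d) = coeff Q (Suc d) + coeff Q d"
  by (simp only: X1_mult coeff_add coeff_pCons_Suc)

lemma Lm_X1mult: "Lm m ([:1, 1:] * P) = [:1, 1:] * Lm m P"
  by (simp only: X1_mult Lm_add Lm_pCons lookup_zero)

lemma ee_inj: "ee k = ee t \<longleftrightarrow> k = t"
proof
  assume h: "ee k = ee t"
  show "k = t"
  proof (rule ccontr)
    assume "k \<noteq> t"
    then have "lookup (ee t) k = 0" unfolding ee_def by (simp add: lookup_single_not_eq)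
    moreover have "lookup (ee k) k = 1" unfolding ee_def by simp
    ultimately show False using h by simp
  qed
qed simp

lemma lookup_mvar_0[simp]: "lookup (mvar k) 0 = 0"
  by (simp add: lookup_mvar)

lemma lookup_mvar_e: "lookup (mvar k) (ee t) = (if k = t then 1 else 0)"
  by (simp add: lookup_mvar ee_inj eq_commute)

definition cc :: "nat \<Rightarrow> rat" where "cc r = (- 1 / 2) ^ r / fact r"

lemma cc_Suc: "cc (Suc r) = - cc r / (2 * of_nat (Suc r))"
  by (simp add: cc_def field_simps)

lemma Lm0_RG: "Lm 0 (RG s) = - (if s = 0 then 0 else [:1, 1:] * pcompose (Lm 0 (PP Gp (s - 1))) [:1, 1:])"
proof -
  have a: "Lm 0 (if s < 2 then 0 else (\<Sum>i=0..s-2. PP Gp i * [:mvar (s - 2 - i):])) = 0"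
    by (simp only: if_distrib[of "Lm 0"] Lm_sum Lm_mult_const_0 lookup_mvar_0 smult_0_left sum.neutral_const if_cancel Lm_zero)
  have b: "Lm 0 (if s = 0 then 0 else [:1, 1:] * pcompose (PP Gp (s - 1)) [:1, 1:])
     = (if s = 0 then 0 else [:1, 1:] * pcompose (Lm 0 (PP Gp (s - 1))) [:1, 1:])"
    by (simp only: Lm_X1mult Lm_pcomp Lm_zero if_distrib[of "Lm 0"])
  show ?thesis unfolding RG_def Lm_diff a b by simp
qed

lemma Lm0_RH: "Lm 0 (RH s) = - (if s = 0 then 0 else [:1, 1:] * Lm 0 (PP Hp (s - 1)))"
proof -
  have a: "Lm 0 (if s < 2 then 0 else (\<Sum>i=0..s-2. pcompose (PP Hp i) [:1, 1:] * [:mvar (s - 2 - i):])) = 0"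
    by (simp only: if_distrib[of "Lm 0"] Lm_sum Lm_mult_const_0 lookup_mvar_0 smult_0_left sum.neutral_const if_cancel Lm_zero)
  have b: "Lm 0 (if s = 0 then 0 else [:1, 1:] * PP Hp (s - 1))
     = (if s = 0 then 0 else [:1, 1:] * Lm 0 (PP Hp (s - 1)))"
    by (simp only: Lm_X1mult Lm_zero if_distrib[of "Lm 0"])
  show ?thesis unfolding RH_def Lm_diff Lm_uminus a b by simp
qed

lemma g0_closed: "coeff (Lm 0 (PP Gp s)) (2 * s) = cc s"
proof (induction s)
  case 0
  have "coeff (Lm 0 (PP Gp 0)) 0 = poly (Lm 0 (PP Gp 0)) (of_nat 0)" by (simp add: poly_0_coeff_0)
  also have "\<dots> = lookup (Gp 0 $ 0) 0" using G_good[of 0] by (simp only: poly_Lm rep_def)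
  also have "\<dots> = 1" by (simp only: Gp_0 E0) simp
  finally show ?case by (simp add: cc_def)
next
  case (Suc s)
  let ?Q = "pcompose (Lm 0 (PP Gp s)) [:1, 1:]"
  have dQ: "degree (Lm 0 (PP Gp s)) \<le> 2 * s" by (rule deg0[OF WG])
  have "of_nat (2 * Suc s) * coeff (Lm 0 (PP Gp (Suc s))) (2 * Suc s)
      = coeff (pcompose (Lm 0 (PP Gp (Suc s))) [:1, 1:] - Lm 0 (PP Gp (Suc s))) (2 * Suc s - 1)"
    by (rule coeff_pcomp_X1_diff[symmetric]) (use deg0[OF WG, of "Suc s"] in auto)
  also have "\<dots> = - coeff ([:1, 1:] * ?Q) (Suc (2 * s))"
    unfolding LG Lm0_RG by simp
  also have "\<dots> = - (coeff ?Q (Suc (2 * s)) + coeff ?Q (2 * s))"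
    by (simp only: coeff_X1_mult_Suc)
  also have "coeff ?Q (Suc (2 * s)) = 0"
    using dQ by (intro coeff_eq_0) (simp add: degree_pcompose)
  also have "coeff ?Q (2 * s) = cc s"
    using coeff_pcomp_X1_top[OF dQ] Suc by simp
  finally have "of_nat (2 * Suc s) * coeff (Lm 0 (PP Gp (Suc s))) (2 * Suc s) = - cc s" by simp
  then show ?case by (simp add: cc_Suc field_simps)
qed

lemma h0_closed: "coeff (Lm 0 (PP Hp s)) (2 * s) = cc s"
proof (induction s)
  case 0
  have "coeff (Lm 0 (PP Hp 0)) 0 = poly (Lm 0 (PP Hp 0)) (of_nat 0)" by (simp add: poly_0_coeff_0)
  also have "\<dots> = lookup (Hp 0 $ 0) 0" using H_good[of 0] by (simp only: poly_Lm rep_def)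
  also have "\<dots> = 1" by (simp only: Hp_0) simp
  finally show ?case by (simp add: cc_def)
next
  case (Suc s)
  let ?Q = "Lm 0 (PP Hp s)"
  have dQ: "degree ?Q \<le> 2 * s" by (rule deg0[OF WH])
  have "of_nat (2 * Suc s) * coeff (Lm 0 (PP Hp (Suc s))) (2 * Suc s)
      = coeff (pcompose (Lm 0 (PP Hp (Suc s))) [:1, 1:] - Lm 0 (PP Hp (Suc s))) (2 * Suc s - 1)"
    by (rule coeff_pcomp_X1_diff[symmetric]) (use deg0[OF WH, of "Suc s"] in auto)
  also have "\<dots> = - coeff ([:1, 1:] * ?Q) (Suc (2 * s))"
    unfolding LH Lm0_RH by simp
  also have "\<dots> = - (coeff ?Q (Suc (2 * s)) + coeff ?Q (2 * s))"
    by (simp only: coeff_X1_mult_Suc)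
  also have "coeff ?Q (Suc (2 * s)) = 0"
    using dQ by (intro coeff_eq_0) simp
  also have "coeff ?Q (2 * s) = cc s" using Suc by simp
  finally have "of_nat (2 * Suc s) * coeff (Lm 0 (PP Hp (Suc s))) (2 * Suc s) = - cc s" by simp
  then show ?case by (simp add: cc_Suc field_simps)
qed


lemma sum_mvar_sel: "(\<Sum>i=0..m. smult (lookup (mvar (m - i)) (ee t)) (f i)) = (if t \<le> m then f (m - t) else (0::rat poly))"
proof (cases "t \<le> m")
  case True
  have "(\<Sum>i=0..m. smult (lookup (mvar (m - i)) (ee t)) (f i)) = (\<Sum>i=0..m. if i = m - t then f i else 0)"
    by (rule sum.cong) (use True in \<open>auto simp: lookup_mvar_e\<close>)
  also have "\<dots> = f (m - t)" by (subst sum.delta) auto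
  finally show ?thesis using True by simp
next
  case False
  have "(\<Sum>i=0..m. smult (lookup (mvar (m - i)) (ee t)) (f i)) = 0"
    using False by (intro sum.neutral ballI) (auto simp: lookup_mvar_e)
  then show ?thesis using False by simp
qed

lemma Le_RG: "Lm (ee t) (RG s) = (if s < 2 then 0 else (if t \<le> s - 2 then Lm 0 (PP Gp (s - 2 - t)) else 0))
    - (if s = 0 then 0 else [:1, 1:] * pcompose (Lm (ee t) (PP Gp (s - 1))) [:1, 1:])"
proof -
  have a: "Lm (ee t) (if s < 2 then 0 else (\<Sum>i=0..s-2. PP Gp i * [:mvar (s - 2 - i):]))
     = (if s < 2 then 0 else (if t \<le> s - 2 then Lm 0 (PP Gp (s - 2 - t)) else 0))"
    by (simp only: if_distrib[of "Lm (ee t)"] Lm_sum Lm_mult_const_e lookup_mvar_0 smult_0_left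
        add_0_right sum_mvar_sel Lm_zero)
  have b: "Lm (ee t) (if s = 0 then 0 else [:1, 1:] * pcompose (PP Gp (s - 1)) [:1, 1:])
     = (if s = 0 then 0 else [:1, 1:] * pcompose (Lm (ee t) (PP Gp (s - 1))) [:1, 1:])"
    by (simp only: Lm_X1mult Lm_pcomp Lm_zero if_distrib[of "Lm (ee t)"])
  show ?thesis unfolding RG_def Lm_diff a b ..
qed

lemma Le_RH: "Lm (ee t) (RH s) = - (if s < 2 then 0 else (if t \<le> s - 2 then pcompose (Lm 0 (PP Hp (s - 2 - t))) [:1, 1:] else 0))
    - (if s = 0 then 0 else [:1, 1:] * Lm (ee t) (PP Hp (s - 1)))"
proof -
  have a: "Lm (ee t) (if s < 2 then 0 else (\<Sum>i=0..s-2. pcompose (PP Hp i) [:1, 1:] * [:mvar (s - 2 - i):]))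
     = (if s < 2 then 0 else (if t \<le> s - 2 then pcompose (Lm 0 (PP Hp (s - 2 - t))) [:1, 1:] else 0))"
    by (simp only: if_distrib[of "Lm (ee t)"] Lm_sum Lm_mult_const_e lookup_mvar_0 smult_0_left
        add_0_right sum_mvar_sel[where f = "\<lambda>i. pcompose (Lm 0 (PP Hp i)) [:1, 1:]"] Lm_zero Lm_pcomp)
  have b: "Lm (ee t) (if s = 0 then 0 else [:1, 1:] * PP Hp (s - 1))
     = (if s = 0 then 0 else [:1, 1:] * Lm (ee t) (PP Hp (s - 1)))"
    by (simp only: Lm_X1mult Lm_zero if_distrib[of "Lm (ee t)"])
  show ?thesis unfolding RH_def Lm_diff Lm_uminus a b ..
qed

lemma cc_rec: "cc (Suc r) - cc r = of_nat (2 * r + 3) * cc (Suc r)"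
proof -
  have "cc r = - (2 * of_nat (Suc r)) * cc (Suc r)" by (simp add: cc_Suc field_simps)
  then show ?thesis by (simp add: algebra_simps)
qed

lemma g1_closed: "coeff (Lm (ee t) (PP Gp (t + 2 + r))) (2 * r + 1) = cc r"
proof (induction r)
  case 0
  have "of_nat 1 * coeff (Lm (ee t) (PP Gp (t + 2))) 1
      = coeff (pcompose (Lm (ee t) (PP Gp (t + 2))) [:1, 1:] - Lm (ee t) (PP Gp (t + 2))) (1 - 1)"
    by (rule coeff_pcomp_X1_diff[symmetric]) (use dege[OF WG, of t "t + 2"] in auto)
  also have "\<dots> = coeff (Lm 0 (PP Gp 0)) 0 - coeff ([:1, 1:] * pcompose (Lm (ee t) (PP Gp (t + 1))) [:1, 1:]) 0"
    unfolding LG Le_RG by simp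
  also have "Lm (ee t) (PP Gp (t + 1)) = 0" by (rule zeroe[OF WG]) simp
  also have "coeff (Lm 0 (PP Gp 0)) 0 = cc 0" using g0_closed[of 0] by simp
  finally show ?case by simp
next
  case (Suc r)
  let ?s = "t + 2 + Suc r"
  let ?Q = "pcompose (Lm (ee t) (PP Gp (t + 2 + r))) [:1, 1:]"
  have dQ: "degree (Lm (ee t) (PP Gp (t + 2 + r))) \<le> 2 * r + 1"
    using dege[OF WG, of t "t + 2 + r"] by simp
  have "of_nat (2 * r + 3) * coeff (Lm (ee t) (PP Gp ?s)) (2 * r + 3)
      = coeff (pcompose (Lm (ee t) (PP Gp ?s)) [:1, 1:] - Lm (ee t) (PP Gp ?s)) (2 * r + 3 - 1)"
    by (rule coeff_pcomp_X1_diff[symmetric]) (use dege[OF WG, of t ?s] in auto)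
  also have "\<dots> = coeff (Lm 0 (PP Gp (Suc r))) (2 * Suc r) - coeff ([:1, 1:] * ?Q) (Suc (2 * r + 1))"
    unfolding LG Le_RG by (simp add: numeral_3_eq_3)
  also have "\<dots> = cc (Suc r) - (coeff ?Q (Suc (2 * r + 1)) + coeff ?Q (2 * r + 1))"
    by (simp only: coeff_X1_mult_Suc g0_closed)
  also have "coeff ?Q (Suc (2 * r + 1)) = 0"
    using dQ by (intro coeff_eq_0) (simp add: degree_pcompose)
  also have "coeff ?Q (2 * r + 1) = cc r"
    using coeff_pcomp_X1_top[OF dQ] Suc by simp
  finally have "of_nat (2 * r + 3) * coeff (Lm (ee t) (PP Gp ?s)) (2 * r + 3) = of_nat (2 * r + 3) * cc (Suc r)"
    using cc_rec[of r] by simp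
  then show ?case by (simp add: numeral_3_eq_3)
qed

lemma h1_closed: "coeff (Lm (ee t) (PP Hp (t + 2 + r))) (2 * r + 1) = - cc r"
proof (induction r)
  case 0
  have "of_nat 1 * coeff (Lm (ee t) (PP Hp (t + 2))) 1
      = coeff (pcompose (Lm (ee t) (PP Hp (t + 2))) [:1, 1:] - Lm (ee t) (PP Hp (t + 2))) (1 - 1)"
    by (rule coeff_pcomp_X1_diff[symmetric]) (use dege[OF WH, of t "t + 2"] in auto)
  also have "\<dots> = - coeff (pcompose (Lm 0 (PP Hp 0)) [:1, 1:]) 0 - coeff ([:1, 1:] * Lm (ee t) (PP Hp (t + 1))) 0"
    unfolding LH Le_RH by simp
  also have "Lm (ee t) (PP Hp (t + 1)) = 0" by (rule zeroe[OF WH]) simp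
  also have "coeff (pcompose (Lm 0 (PP Hp 0)) [:1, 1:]) 0 = cc 0"
    using coeff_pcomp_X1_top[OF deg0[OF WH, of 0]] h0_closed[of 0] by simp
  finally show ?case by simp
next
  case (Suc r)
  let ?s = "t + 2 + Suc r"
  let ?Q = "Lm (ee t) (PP Hp (t + 2 + r))"
  have dQ: "degree ?Q \<le> 2 * r + 1"
    using dege[OF WH, of t "t + 2 + r"] by simp
  have "of_nat (2 * r + 3) * coeff (Lm (ee t) (PP Hp ?s)) (2 * r + 3)
      = coeff (pcompose (Lm (ee t) (PP Hp ?s)) [:1, 1:] - Lm (ee t) (PP Hp ?s)) (2 * r + 3 - 1)"
    by (rule coeff_pcomp_X1_diff[symmetric]) (use dege[OF WH, of t ?s] in auto)
  also have "\<dots> = - coeff (pcompose (Lm 0 (PP Hp (Suc r))) [:1, 1:]) (2 * Suc r) - coeff ([:1, 1:] * ?Q) (Suc (2 * r + 1))"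
    unfolding LH Le_RH by (simp add: numeral_3_eq_3)
  also have "coeff (pcompose (Lm 0 (PP Hp (Suc r))) [:1, 1:]) (2 * Suc r) = cc (Suc r)"
    using coeff_pcomp_X1_top[OF deg0[OF WH, of "Suc r"]] h0_closed[of "Suc r"] by simp
  also have "coeff ([:1, 1:] * ?Q) (Suc (2 * r + 1)) = coeff ?Q (Suc (2 * r + 1)) + coeff ?Q (2 * r + 1)"
    by (rule coeff_X1_mult_Suc)
  also have "coeff ?Q (Suc (2 * r + 1)) = 0"
    using dQ by (intro coeff_eq_0) simp
  also have "coeff ?Q (2 * r + 1) = - cc r" using Suc by simp
  finally have eq: "of_nat (2 * r + 3) * coeff (Lm (ee t) (PP Hp ?s)) (2 * r + 3) = of_nat (2 * r + 3) * (- cc (Suc r))"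
    using cc_rec[of r] by (simp add: algebra_simps)
  have nz: "(of_nat (2 * r + 3) :: rat) \<noteq> 0" by simp
  have XY: "coeff (Lm (ee t) (PP Hp ?s)) (2 * r + 3) = - cc (Suc r)"
    using mult_left_cancel[OF nz] eq by blast
  have "2 * Suc r + 1 = 2 * r + 3" by simp
  then show ?case using XY by (simp only:)
qed


definition Ek :: "nat \<Rightarrow> mpoly" where "Ek k = (1 + Bser) $ k"

lemma coeffGH_eq: "coeffGH n (Suc k) = (\<Sum>i=0..n-1. (Gp k $ (i + 2) - Hp k $ (i + 2)) * Ek (n - 1 - i))"
  by (simp add: coeffGH_def fps_mult_nth Ek_def)

definition PT :: "nat \<Rightarrow> mpoly poly" where
  "PT n = (\<Sum>i=0..n-1. (PP Gp (i + 2) - PP Hp (i + 2)) * [:Ek (n - 1 - i):])"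

lemma rep_PT: "coeffGH n (Suc k) = poly (PT n) (of_nat k)"
proof -
  have "\<And>s. rep Gp s (PP Gp s)" "\<And>s. rep Hp s (PP Hp s)" using G_good H_good by blast+
  then show ?thesis unfolding coeffGH_eq PT_def by (simp add: poly_sum rep_def mult.commute)
qed

lemma Wc_PT: assumes "1 \<le> n" shows "Wc 0 (n + 1) (PT n)"
  unfolding PT_def
proof (rule Wc_sum)
  fix i assume i: "i \<in> {0..n-1}"
  have "Wc 0 (i + 2) (PP Gp (i + 2) - PP Hp (i + 2))" by (rule Wc_diff[OF WG WH])
  moreover have "Wc 0 (n - 1 - i) [:Ek (n - 1 - i):]"
    by (rule Wc_const) (use E_keys in \<open>auto simp: Ek_def\<close>)
  ultimately show "Wc 0 (n + 1) ((PP Gp (i + 2) - PP Hp (i + 2)) * [:Ek (n - 1 - i):])"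
    by (rule Wc_mult') (use i assms in auto)
qed

lemma lookup_E_0: "lookup (Ek k) 0 = (if k = 0 then 1 else 0)"
  unfolding Ek_def E_nth by (simp add: lookup_add)

lemma lookup_E_e: "lookup (Ek k) (ee t) = (if k = t + 2 then 1 else 0)"
proof -
  have "lookup (1::mpoly) (ee t) = 0" by (simp add: lookup_one)
  then show ?thesis unfolding Ek_def E_nth by (auto simp: lookup_add lookup_mvar_e)
qed

lemma top_PT:
  assumes "1 \<le> i0" "i0 \<le> n - 1" "t = n - i0 - 1"
  shows "coeff (Lm (ee t) (PT n)) (2 * i0 + 1) = 2 * cc i0"
proof -
  let ?D = "\<lambda>i. PP Gp (i + 2) - PP Hp (i + 2)"
  let ?K = "2 * i0 + 1"
  have n1: "1 \<le> n" using assms by simp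
  have "coeff (Lm (ee t) (PT n)) ?K = (\<Sum>i=0..n-1.
      lookup (Ek (n - 1 - i)) (ee t) * coeff (Lm 0 (?D i)) ?K
      + lookup (Ek (n - 1 - i)) 0 * coeff (Lm (ee t) (?D i)) ?K)"
    unfolding PT_def Lm_sum Lm_mult_const_e coeff_sum coeff_add coeff_smult ..
  also have "\<dots> = (\<Sum>i\<in>{n-1}.
      lookup (Ek (n - 1 - i)) (ee t) * coeff (Lm 0 (?D i)) ?K
      + lookup (Ek (n - 1 - i)) 0 * coeff (Lm (ee t) (?D i)) ?K)"
  proof (rule sum.mono_neutral_right)
    show "\<forall>i\<in>{0..n-1} - {n-1}. lookup (Ek (n - 1 - i)) (ee t) * coeff (Lm 0 (?D i)) ?K
      + lookup (Ek (n - 1 - i)) 0 * coeff (Lm (ee t) (?D i)) ?K = 0"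
    proof
      fix i assume i: "i \<in> {0..n-1} - {n-1}"
      then have "lookup (Ek (n - 1 - i)) 0 = 0" by (auto simp: lookup_E_0)
      moreover have "lookup (Ek (n - 1 - i)) (ee t) * coeff (Lm 0 (?D i)) ?K = 0"
      proof (cases "n - 1 - i = t + 2")
        case True
        then have "i + 2 = i0" using assms i by auto
        then have "degree (Lm 0 (?D i)) \<le> 2 * i0"
          using deg0[OF Wc_diff[OF WG WH], of "i + 2"] by simp
        then have "coeff (Lm 0 (?D i)) ?K = 0" by (intro coeff_eq_0) simp
        then show ?thesis by simp
      next
        case False
        then show ?thesis by (simp add: lookup_E_e)
      qed
      ultimately show "lookup (Ek (n - 1 - i)) (ee t) * coeff (Lm 0 (?D i)) ?K
      + lookup (Ek (n - 1 - i)) 0 * coeff (Lm (ee t) (?D i)) ?K = 0" by simp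
    qed
  qed auto
  also have "\<dots> = coeff (Lm (ee t) (?D (n - 1))) ?K"
    by (simp add: lookup_E_0 lookup_E_e)
  also have "n - 1 + 2 = t + 2 + i0" using assms by simp
  also have "coeff (Lm (ee t) (PP Gp (t + 2 + i0) - PP Hp (t + 2 + i0))) ?K = cc i0 - (- cc i0)"
    by (simp only: Lm_diff coeff_diff g1_closed h1_closed)
  finally show ?thesis by simp
qed


definition Qr :: "rat poly \<Rightarrow> rat poly" where "Qr C = [:1, 2:] * pcompose C [:0, 1, 1:]"

lemma rat_final_aux:
  fixes l :: "nat \<Rightarrow> rat" and n :: nat
  defines "Cr \<equiv> (\<Sum>i\<le>n. monom (l i) i)"
  shows "i \<le> n \<Longrightarrow> coeff Cr i = l i"
    and "Cr \<noteq> 0 \<Longrightarrow> Qr Cr \<noteq> 0 \<and> degree (Qr Cr) = 2 * degree Cr + 1 \<and> lead_coeff (Qr Cr) = 2 * lead_coeff Cr"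
proof -
  show "i \<le> n \<Longrightarrow> coeff Cr i = l i"
    unfolding Cr_def by (simp add: coeff_sum)
  assume nz: "Cr \<noteq> 0"
  have lc: "lead_coeff (pcompose Cr [:0, 1, 1:]) = lead_coeff Cr"
    by (subst lead_coeff_comp) simp_all
  then have pnz: "pcompose Cr [:0, 1, 1:] \<noteq> 0" using nz by auto
  have dp: "degree (pcompose Cr [:0, 1, 1:]) = degree Cr * 2" by (simp add: degree_pcompose)
  have a12: "[:1, 2:] \<noteq> (0::rat poly)" by simp
  have "Qr Cr \<noteq> 0" unfolding Qr_def by (rule no_zero_divisors[OF a12 pnz])
  moreover have "degree (Qr Cr) = 2 * degree Cr + 1"
    unfolding Qr_def using pnz dp a12 by (subst degree_mult_eq) auto
  moreover have "lead_coeff (Qr Cr) = 2 * lead_coeff Cr"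
    unfolding Qr_def lead_coeff_mult lc by simp
  ultimately show "Qr Cr \<noteq> 0 \<and> degree (Qr Cr) = 2 * degree Cr + 1 \<and> lead_coeff (Qr Cr) = 2 * lead_coeff Cr"
    by blast
qed

lemma rat_final_a:
  fixes l :: "nat \<Rightarrow> rat"
  assumes "i \<le> n" "l i \<noteq> 0"
  shows "Qr (\<Sum>i\<le>n. monom (l i) i) \<noteq> 0 \<and> 2 * i + 1 \<le> degree (Qr (\<Sum>i\<le>n. monom (l i) i))"
proof -
  let ?C = "\<Sum>i\<le>n. monom (l i) i"
  have c: "coeff ?C i = l i" using rat_final_aux(1)[OF assms(1)] by simp
  then have nz: "?C \<noteq> 0" using assms(2) by auto
  have "i \<le> degree ?C" using c assms(2) by (intro le_degree) simp
  then show ?thesis using rat_final_aux(2)[OF nz] by simp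
qed

lemma rat_final_b:
  fixes l :: "nat \<Rightarrow> rat"
  assumes "i \<le> n" "degree (Qr (\<Sum>i\<le>n. monom (l i) i)) \<le> 2 * i + 1"
  shows "coeff (Qr (\<Sum>i\<le>n. monom (l i) i)) (2 * i + 1) = 2 * l i"
proof -
  let ?C = "\<Sum>i\<le>n. monom (l i) i"
  have c: "coeff ?C i = l i" using rat_final_aux(1)[OF assms(1)] by simp
  show ?thesis
  proof (cases "?C = 0")
    case True
    then show ?thesis using c by (simp add: Qr_def)
  next
    case False
    note F = rat_final_aux(2)[OF False]
    then have "degree ?C \<le> i" using assms(2) by simp
    show ?thesis
    proof (cases "degree ?C = i")
      case True
      then have dq: "degree (Qr ?C) = 2 * i + 1" using F by simp
      have "coeff (Qr ?C) (2 * i + 1) = lead_coeff (Qr ?C)" by (simp only: dq)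
      also have "\<dots> = 2 * lead_coeff ?C" using F by blast
      also have "lead_coeff ?C = l i" using True c by (simp only:)
      finally show ?thesis .
    next
      case False
      then have "degree ?C < i" using \<open>degree ?C \<le> i\<close> by simp
      then have "l i = 0" using c coeff_eq_0 by metis
      moreover have "coeff (Qr ?C) (2 * i + 1) = 0"
        using F \<open>degree ?C < i\<close> by (intro coeff_eq_0) simp
      ultimately show ?thesis by simp
    qed
  qed
qed

definition dg :: "(nat \<Rightarrow>\<^sub>0 nat) \<Rightarrow> nat" where "dg m = (\<Sum>l\<in>keys m. lookup m l)"
definition Wt :: "(nat \<Rightarrow>\<^sub>0 nat) \<Rightarrow> nat" where "Wt m = (\<Sum>l\<in>keys m. l * lookup m l)"

lemma om_alt: "om m s = 2 * int s - 2 * int (Wt m) - 3 * int (dg m)"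
proof -
  have "(\<Sum>l\<in>keys m. (2 * int l + 3) * int (lookup m l)) = 2 * int (Wt m) + 3 * int (dg m)"
    by (simp add: Wt_def dg_def sum.distrib sum_distrib_left algebra_simps)
  then show ?thesis by (simp add: om_def)
qed

lemma xw_alt: "xw m = Wt m + 2 * dg m"
proof -
  have "xw m = (\<Sum>l\<in>keys m. l * lookup m l + 2 * lookup m l)"
    unfolding xw_def by (intro sum.cong refl) (simp add: algebra_simps)
  also have "\<dots> = Wt m + 2 * dg m" by (simp add: sum.distrib Wt_def dg_def sum_distrib_left)
  finally show ?thesis .
qed

lemma key_le_Wt: "l \<in> keys m \<Longrightarrow> l \<le> Wt m"
proof -
  assume l: "l \<in> keys m"
  then have "l * lookup m l \<le> Wt m" unfolding Wt_def by (intro member_le_sum) auto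
  moreover have "l \<le> l * lookup m l" using l by (simp add: in_keys_iff)
  ultimately show ?thesis by linarith
qed

lemma key_le_dg: "l \<in> keys m \<Longrightarrow> 1 \<le> dg m"
proof -
  assume l: "l \<in> keys m"
  then have "lookup m l \<le> dg m" unfolding dg_def by (intro member_le_sum) auto
  moreover have "1 \<le> lookup m l" using l by (simp add: in_keys_iff)
  ultimately show ?thesis by linarith
qed

lemma Wt_ge_t: "t \<in> keys m \<Longrightarrow> t \<le> Wt m" by (rule key_le_Wt)

lemma dg1_is_ee: assumes "t \<in> keys m" "dg m \<le> 1" shows "m = ee t"
proof (rule poly_mapping_eqI)
  fix l
  have lt: "lookup m t \<le> dg m" using assms(1) unfolding dg_def by (intro member_le_sum) auto
  have t1: "1 \<le> lookup m t" using assms(1) by (simp add: in_keys_iff)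
  show "lookup m l = lookup (ee t) l"
  proof (cases "l = t")
    case True then show ?thesis using lt t1 assms(2) by (simp add: ee_def)
  next
    case False
    show ?thesis
    proof (rule ccontr)
      assume "lookup m l \<noteq> lookup (ee t) l"
      then have "l \<in> keys m" using False by (simp add: ee_def lookup_single_not_eq in_keys_iff)
      then have "lookup m l + lookup m t = (\<Sum>x\<in>{l, t}. lookup m x)" using False by simp
      also have "\<dots> \<le> dg m" unfolding dg_def using \<open>l \<in> keys m\<close> assms(1)
        by (intro sum_mono2) auto
      finally show False using t1 \<open>l \<in> keys m\<close> assms(2) by (simp add: in_keys_iff)
    qed
  qed
qed

lemma sum_split0: "(\<Sum>i\<le>(n::nat). f i) = f 0 + (\<Sum>i=1..n. (f i :: 'a::comm_monoid_add))"
  by (induction n) (simp_all add: sum.atMost_Suc sum.cl_ivl_Suc add.assoc)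


lemma lookup_of_int_mult: "lookup (of_int z * (y::mpoly)) m = of_int z * lookup y m"
  using lookup_mult_of_int[of y z m] by (simp add: mult.commute)

lemma lookup_isS_rhs:
  fixes S :: "nat \<Rightarrow> mpoly" and a :: mpoly and z w :: int
  shows "lookup (of_int z * (a + (\<Sum>i=1..n. S i * of_int w ^ i))) m =
    of_int z * (lookup a m + (\<Sum>i=1..n. lookup (S i) m * of_int w ^ i))"
  by (simp add: lookup_of_int_mult lookup_add lookup_sum lookup_mult_of_int flip: of_int_power)

lemma poly_Qr: "poly (Qr (\<Sum>k\<le>n. monom (c k) k)) x = (1 + 2 * x) * (\<Sum>k\<le>n. c k * (poly [:0, 1, 1:] x) ^ k)"
  by (simp add: Qr_def poly_sum poly_monom poly_pcompose algebra_simps)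

lemma nat_div_bound: "k * d \<le> X \<Longrightarrow> 0 < k \<Longrightarrow> d \<le> X div (k::nat)"
  by (simp add: less_eq_div_iff_mult_less_eq mult.commute)

theorem proposition4p3:
  fixes n i :: nat and S :: "nat \<Rightarrow> mpoly"
  assumes "is_S n S" and "n \<ge> 2" and "1 \<le> i" and "i \<le> n - 1"
  shows "mvars (S i) \<subseteq> {..<n - i}
    \<and> tdeg (S i) \<le> min ((2 * (n - i) + 1) div 3) ((n + 1) div 2)
    \<and> (\<exists>F. mvars F \<subseteq> {..<n - i - 1} \<and>
           S i = F + mconst ((-1) ^ i / (2 ^ i * fact i)) * mvar (n - i - 1))"
proof -
  have hS: "\<forall>j::nat. j \<ge> 1 \<longrightarrow> coeffGH n j = of_int (2 * int j - 1) *
      (mvar (n - 1) + S 0 + (\<Sum>i=1..n. S i * of_int (int j * (int j - 1)) ^ i))"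
    using assms(1) unfolding is_S_def by blast
  define lf where "lf m k = (if k = 0 then lookup (mvar (n - 1) + S 0) m else lookup (S k) m)" for m k
  have LmPT: "Lm m (PT n) = Qr (\<Sum>k\<le>n. monom (lf m k) k)" for m
  proof (rule rat_poly_eq_nat)
    fix j :: nat
    have c1: "(of_int (2 * int (Suc j) - 1) :: rat) = 1 + 2 * of_nat j" by simp
    have c2: "(of_int (int (Suc j) * (int (Suc j) - 1)) :: rat) = poly [:0, 1, 1:] (of_nat j)"
      by (simp add: algebra_simps)
    have "poly (Lm m (PT n)) (of_nat j) = lookup (coeffGH n (Suc j)) m"
      by (simp add: poly_Lm rep_PT)
    also have "\<dots> = lookup (of_int (2 * int (Suc j) - 1) *
      (mvar (n - 1) + S 0 + (\<Sum>i=1..n. S i * of_int (int (Suc j) * (int (Suc j) - 1)) ^ i))) m"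
      using hS by simp
    also have "\<dots> = (1 + 2 * of_nat j) * (lf m 0 + (\<Sum>i=1..n. lf m i * (poly [:0, 1, 1:] (of_nat j)) ^ i))"
      unfolding lookup_isS_rhs c1 c2 lf_def by simp
    also have "\<dots> = poly (Qr (\<Sum>k\<le>n. monom (lf m k) k)) (of_nat j)"
      by (subst poly_Qr, subst sum_split0, simp)
    finally show "poly (Lm m (PT n)) (of_nat j) = poly (Qr (\<Sum>k\<le>n. monom (lf m k) k)) (of_nat j)" .
  qed
  have n1: "1 \<le> n" using assms(2) by simp
  have WPT: "Wc 0 (n + 1) (PT n)" by (rule Wc_PT[OF n1])
  have bound: "int (2 * k + 1) \<le> om m (n + 1) \<and> xw m \<le> n + 1"
    if k: "1 \<le> k" "k \<le> n" and nz: "lookup (S k) m \<noteq> 0" for m k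
  proof -
    have "lf m k \<noteq> 0" using k nz by (simp add: lf_def)
    from rat_final_a[of k n "lf m", OF k(2) this]
    have Q: "Lm m (PT n) \<noteq> 0" "2 * k + 1 \<le> degree (Lm m (PT n))" unfolding LmPT by auto
    let ?d = "degree (Lm m (PT n))"
    have cnz: "coeff (Lm m (PT n)) ?d \<noteq> 0" using Q(1) leading_coeff_0_iff by blast
    then have "int ?d + 0 \<le> om m (n + 1)" by (rule Lm_deg[OF WPT])
    moreover have "m \<in> keys (coeff (PT n) ?d)" using cnz by (simp add: in_keys_iff)
    then have "xw m \<le> n + 1" using WcD[OF WPT] by blast
    ultimately show ?thesis using Q(2) by linarith
  qed
  define t where "t = n - i - 1"
  have ti: "t + 2 + i = n + 1" using assms(3,4) by (simp add: t_def)
  have coef: "lookup (S i) (ee t) = cc i"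
  proof -
    let ?P = "Lm (ee t) (PT n)"
    have om_t: "om (ee t) (n + 1) = int (2 * i + 1)" using ti by simp
    have dP: "degree ?P \<le> 2 * i + 1"
    proof (cases "?P = 0")
      case False
      have "degree ?P \<le> nat (om (ee t) (n + 1) - 0)"
        by (rule Lm_degree[OF WPT]) (use om_t in linarith)
      then show ?thesis using om_t by (simp del: om_e)
    qed simp
    have "i \<le> n" using assms(4) by simp
    from rat_final_b[of i n "lf (ee t)", OF this] dP
    have "coeff ?P (2 * i + 1) = 2 * lf (ee t) i" unfolding LmPT by simp
    moreover have "coeff ?P (2 * i + 1) = 2 * cc i"
      by (rule top_PT) (use assms in \<open>auto simp: t_def\<close>)
    ultimately show ?thesis using assms(3) by (simp add: lf_def)
  qed
  have keybound: "2 * int i + 1 \<le> 2 * int (n + 1) - 2 * int (Wt m) - 3 * int (dg m) \<and> Wt m + 2 * dg m \<le> n + 1"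
    if "m \<in> keys (S i)" for m
  proof -
    have "lookup (S i) m \<noteq> 0" using that by (simp add: in_keys_iff)
    from bound[OF assms(3) _ this] assms(4) show ?thesis by (simp add: om_alt xw_alt)
  qed
  have vars: "l < n - i" if "m \<in> keys (S i)" "l \<in> keys m" for m l
  proof -
    have a: "int l \<le> int (Wt m)" "1 \<le> int (dg m)" using that(2) key_le_Wt key_le_dg by auto
    have kb: "2 * int i + 1 \<le> 2 * int (n + 1) - 2 * int (Wt m) - 3 * int (dg m)"
      using keybound[OF that(1)] by blast
    have "int (n + 1) = int n + 1" by simp
    then have "int l < int n - int i" using a kb by arith
    then show ?thesis using assms(4) by linarith
  qed
  have part1: "mvars (S i) \<subseteq> {..<n - i}"
    unfolding mvars_def using vars by blast
  have part2: "tdeg (S i) \<le> min ((2 * (n - i) + 1) div 3) ((n + 1) div 2)"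
  proof -
    have "dg m \<le> min ((2 * (n - i) + 1) div 3) ((n + 1) div 2)" if "m \<in> keys (S i)" for m
    proof -
      have kb: "2 * int i + 1 \<le> 2 * int (n + 1) - 2 * int (Wt m) - 3 * int (dg m)" "Wt m + 2 * dg m \<le> n + 1"
        using keybound[OF that] by auto
      have "int (n + 1) = int n + 1" by simp
      then have "3 * int (dg m) \<le> 2 * (int n - int i) + 1" using kb(1) by arith
      then have "3 * dg m \<le> 2 * (n - i) + 1" using assms(4) by arith
      then have a: "dg m \<le> (2 * (n - i) + 1) div 3" by (rule nat_div_bound) simp
      have "2 * dg m \<le> n + 1" using kb(2) by linarith
      then have b: "dg m \<le> (n + 1) div 2" by (rule nat_div_bound) simp
      show ?thesis using a b by simp
    qed
    then show ?thesis unfolding tdeg_def dg_def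
      by (subst Max_le_iff) auto
  qed
  define L :: rat where "L = (-1) ^ i / (2 ^ i * fact i)"
  have h12: "(- 1 / 2 :: rat) ^ i = (- 1) ^ i / 2 ^ i" by (rule power_divide)
  have ccL: "cc i = L" unfolding cc_def L_def h12 by simp
  have MLx: "mconst L * mvar (n - i - 1) = single (ee t) L"
    unfolding mconst_def mvar_def ee_def t_def mult_single by simp
  define F where "F = S i - single (ee t) L"
  have SF: "S i = F + mconst L * mvar (n - i - 1)" unfolding F_def MLx by simp
  have part3: "mvars F \<subseteq> {..<n - i - 1}"
  proof -
    have "l < t" if m: "m \<in> keys F" and l: "l \<in> keys m" for m l
    proof -
      have "lookup F (ee t) = 0" using coef ccL by (simp add: F_def lookup_minus)
      then have mne: "m \<noteq> ee t" using m by (auto simp: in_keys_iff)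
      then have "lookup (S i) m = lookup F m" by (simp add: F_def lookup_minus lookup_single_not_eq)
      then have mS: "m \<in> keys (S i)" using m by (simp add: in_keys_iff)
      have "l < n - i" by (rule vars[OF mS l])
      then have "l \<le> t" by (simp add: t_def)
      moreover have "l \<noteq> t"
      proof
        assume lt: "l = t"
        have "t \<le> Wt m" using l lt key_le_Wt by blast
        moreover have "2 * int i + 1 \<le> 2 * int (n + 1) - 2 * int (Wt m) - 3 * int (dg m)"
          using keybound[OF mS] by blast
        moreover have "int (n + 1) = int t + 2 + int i" using ti by linarith
        ultimately have "int (dg m) \<le> 1" by arith
        then have "dg m \<le> 1" by simp
        then have "m = ee t" using dg1_is_ee l lt by blast
        then show False using mne by simp
      qed
      ultimately show "l < t" by simp
    qed
    then show ?thesis unfolding mvars_def t_def by blast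
  qed
  show ?thesis using part1 part2 part3 SF unfolding L_def by blast
qed

end
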